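(* Let $T>0$; let $D_M,D_I:\mathbb{R}\to[0,\infty)$, $d_M,d_I:\mathbb{R}\to(0,\infty)$, $\tau:\mathbb{R}\to(0,\infty)$, $p:\mathbb{R}\to[0,\infty)$ be $C^1$ and $T$-periodic; let $h\in C^1([0,\infty);[0,\infty))$. Assume: (a) there are $0<\alpha\le\beta<t_\alpha\le t_\beta<T$ with $t_\alpha-\tau(t_\alpha)=\alpha$, $t_\beta-\tau(t_\beta)=\beta$ and $p(t)=0$ for $t\in[0,\alpha]\cup[\beta,T]$; (b) $\tau'<1$ on $\mathbb{R}$; (c) $h(0)=0$, $\lim_{z\to\infty}h(z)=0$, and for some $z^*>0$, $h$ is increasing on $[0,z^* )$ and decreasing on $[z^*,\infty)$; (d) $h(\lambda z)\ge\lambda h(z)$ for $z\ge0$, $\lambda\in(0,1)$; (e) $L>1$. Let $u^*$ be the minimal positive fixed point of $\overline{Q}$ and assume moreover that $h$ is nondecreasing on $[0,u^*]$. Then $Q$ maps $\mathcal{C}_{u^*}$ into $\mathcal{C}_{u^*}$ and: (i) $T_yQ=QT_y$ for all $y\in\mathbb{R}$, where $T_y[v](x)=v(x-y)$; (ii) $Q$ is continuous on $\mathcal{C}_{u^*}$ with respect to the compact-open topology; (iii) $Q[u]\ge Q[v]$ whenever $u\ge v$ in $\mathcal{C}_{u^*}$; (iv) $\overline{Q}:[0,u^*]\to[0,u^*]$ has the two fixed points $0$ and $u^*$, and $Q[\gamma]>\gamma$ for every constant $\gamma\in(0,u^* )$; (v) $Q[\lambda\phi]\ge\lambda Q[\phi]$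 for all $\phi\in\mathcal{C}_{u^*}$ and $\lambda\in(0,1)$.
   Context: Notation. For $t>s$ let $k_M(t,s,x)=\big(4\pi\int_s^tD_M\big)^{-1/2}\exp\!\big(-\frac{x^2}{4\int_s^tD_M}-\int_s^td_M\big)$, the Green function of $\partial_t\rho=D_M(t)\partial_{xx}\rho-d_M(t)\rho$ (interpreted as $e^{-\int_s^td_M}$ times the Dirac mass at $0$ when $\int_s^tD_M=0$); $k_I$ is defined in the same way with $D_I,d_I$. Let $\overline{k}_M(t,s)=e^{-\int_s^td_M}$. For a bounded function $\phi$ on $\mathbb{R}$, set $R(t,\phi)(x)=(1-\tau'(t))\int_{\mathbb{R}}k_I(t,t-\tau(t),x-y)\,p(t-\tau(t))\,h(\phi(y))\,dy.$ The map $Q$ on bounded functions is $Q[\varphi]=k_M(T,0,\cdot)*\varphi+\int_{t_\alpha}^{t_\beta}k_M(T,s,\cdot)*R\big(s,k_M(s-\tau(s),0,\cdot)*\varphi\big)\,ds$ ($*$ = convolution in $x$), and $\overline{Q}$ is its restriction to constants: $\overline{Q}[z]=z\overline{k}_M(T,0)+\int_{t_\alpha}^{t_\beta}\overline{k}_M(T,s)R(s,z\overline{k}_M(s-\tau(s),0))ds$. Let $\partial_\varphi R(s,0)=(1-\tau'(s))\varepsilon(s)p(s-\tau(s))h'(0)$ with $\varepsilon(s)=e^{-\int_{s-\tau(s)}^sd_I}$, and $L=\frac{\overline{k}_M(T,0)}{1-\overline{k}_M(T,0)}\int_{t_\alpha}^{t_\beta}\frac{\partial_\varphi R(s,0)}{\overline{k}_M(s,s-\tau(s))}ds.$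 When $L>1$, $\overline{Q}$ has a positive fixed point and $u^*$ denotes the minimal one. $\mathcal{C}=BC(\mathbb{R};\mathbb{R})$ with the compact-open topology (induced by $\|u\|=\sum_{n\ge1}2^{-n}\sup_{|x|\le n}|u(x)|$), ordered pointwise, and $\mathcal{C}_r=\{v\in\mathcal{C}:0\le v\le r\}$. *)

theory Defs
  imports "HOL-Analysis.Analysis"
begin

definition tint :: "(real \<Rightarrow> real) \<Rightarrow> real \<Rightarrow> real \<Rightarrow> real" where
  "tint f s t = integral {s..t} f"

definition kbar :: "(real \<Rightarrow> real) \<Rightarrow> real \<Rightarrow> real \<Rightarrow> real" where
  "kbar d t s = exp (- tint d s t)"

text \<open>Green function k(t,s,x) of rho_t = D(t) rho_xx - d(t) rho (for int_s^t D > 0).\<close>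
definition green :: "(real \<Rightarrow> real) \<Rightarrow> (real \<Rightarrow> real) \<Rightarrow> real \<Rightarrow> real \<Rightarrow> real \<Rightarrow> real" where
  "green D d t s x = (4 * pi * tint D s t) powr (-1/2)
       * exp (- (x^2) / (4 * tint D s t) - tint d s t)"

text \<open>Convolution (k(t,s,.) * phi)(x) = int k(t,s,x-y) phi(y) dy; when int_s^t D = 0
  the kernel is exp(-int_s^t d) times the Dirac mass at 0.\<close>
definition kconv :: "(real \<Rightarrow> real) \<Rightarrow> (real \<Rightarrow> real) \<Rightarrow> real \<Rightarrow> real
      \<Rightarrow> (real \<Rightarrow> real) \<Rightarrow> real \<Rightarrow> real" where
  "kconv D d t s phi x =
     (if tint D s t = 0 then kbar d t s * phi x
      else integral UNIV (\<lambda>y. green D d t s (x - y) * phi y))"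

definition Rop :: "(real \<Rightarrow> real) \<Rightarrow> (real \<Rightarrow> real) \<Rightarrow> (real \<Rightarrow> real) \<Rightarrow> (real \<Rightarrow> real)
      \<Rightarrow> (real \<Rightarrow> real) \<Rightarrow> real \<Rightarrow> (real \<Rightarrow> real) \<Rightarrow> real \<Rightarrow> real" where
  "Rop DI dI tau p h t phi x =
     (1 - deriv tau t) * kconv DI dI t (t - tau t) (\<lambda>y. p (t - tau t) * h (phi y)) x"

definition Qop :: "real \<Rightarrow> (real \<Rightarrow> real) \<Rightarrow> (real \<Rightarrow> real) \<Rightarrow> (real \<Rightarrow> real) \<Rightarrow> (real \<Rightarrow> real)
      \<Rightarrow> (real \<Rightarrow> real) \<Rightarrow> (real \<Rightarrow> real) \<Rightarrow> (real \<Rightarrow> real) \<Rightarrow> real \<Rightarrow> real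
      \<Rightarrow> (real \<Rightarrow> real) \<Rightarrow> real \<Rightarrow> real" where
  "Qop T DM dM DI dI tau p h ta tb phi x =
     kconv DM dM T 0 phi x
     + integral {ta..tb} (\<lambda>s. kconv DM dM T s
          (Rop DI dI tau p h s (kconv DM dM (s - tau s) 0 phi)) x)"

definition Qbar :: "real \<Rightarrow> (real \<Rightarrow> real) \<Rightarrow> (real \<Rightarrow> real) \<Rightarrow> (real \<Rightarrow> real)
      \<Rightarrow> (real \<Rightarrow> real) \<Rightarrow> (real \<Rightarrow> real) \<Rightarrow> (real \<Rightarrow> real) \<Rightarrow> real \<Rightarrow> real
      \<Rightarrow> real \<Rightarrow> real" where
  "Qbar T dM DI dI tau p h ta tb z =
     z * kbar dM T 0
     + integral {ta..tb} (\<lambda>s. kbar dM T s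
          * Rop DI dI tau p h s (\<lambda>_. z * kbar dM (s - tau s) 0) 0)"

text \<open>partial_phi R(s,0) with eps(s) = exp(- int_{s - tau s}^s d_I); h0' = h'(0).\<close>
definition dR0 :: "(real \<Rightarrow> real) \<Rightarrow> (real \<Rightarrow> real) \<Rightarrow> (real \<Rightarrow> real) \<Rightarrow> real \<Rightarrow> real \<Rightarrow> real" where
  "dR0 dI tau p h0' s =
     (1 - deriv tau s) * exp (- tint dI (s - tau s) s) * p (s - tau s) * h0'"

definition Lnum :: "real \<Rightarrow> (real \<Rightarrow> real) \<Rightarrow> (real \<Rightarrow> real) \<Rightarrow> (real \<Rightarrow> real)
      \<Rightarrow> (real \<Rightarrow> real) \<Rightarrow> real \<Rightarrow> real \<Rightarrow> real \<Rightarrow> real" where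
  "Lnum T dM dI tau p h0' ta tb =
     kbar dM T 0 / (1 - kbar dM T 0)
     * integral {ta..tb} (\<lambda>s. dR0 dI tau p h0' s / kbar dM s (s - tau s))"

definition Cr :: "real \<Rightarrow> (real \<Rightarrow> real) set" where
  "Cr r = {v. continuous_on UNIV v \<and> (\<forall>x. 0 \<le> v x \<and> v x \<le> r)}"

text \<open>The metric inducing the compact-open topology:
  ||u|| = sum_{n \<ge> 1} 2^-n sup_{|x| \<le> n} |u x|.\<close>
definition conorm :: "(real \<Rightarrow> real) \<Rightarrow> real" where
  "conorm u = (\<Sum>n. (1/2) ^ Suc n *
      (SUP x \<in> {- real (Suc n) .. real (Suc n)}. \<bar>u x\<bar>))"

definition translate :: "real \<Rightarrow> (real \<Rightarrow> real) \<Rightarrow> real \<Rightarrow> real" where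
  "translate y v x = v (x - y)"

definition periodic :: "real \<Rightarrow> (real \<Rightarrow> real) \<Rightarrow> bool" where
  "periodic T f \<longleftrightarrow> (\<forall>t. f (t + T) = f t)"

end

theory Submission
  imports Defs "HOL-Probability.Distributions"
begin


definition gk :: "real \<Rightarrow> real \<Rightarrow> real" where
  "gk a z = normal_density 0 (sqrt (2*a)) z"

definition gconv :: "real \<Rightarrow> (real \<Rightarrow> real) \<Rightarrow> real \<Rightarrow> real" where
  "gconv a g x = (if a = 0 then g x else integral UNIV (\<lambda>y. gk a (x - y) * g y))"

lemma gk_nonneg[simp]: "0 \<le> gk a z"
  by (simp add: gk_def)

lemma gk_measurable[measurable (raw)]:
  assumes [measurable]: "f \<in> borel_measurable M" "g \<in> borel_measurable M"
  shows "(\<lambda>w. gk (f w) (g w)) \<in> borel_measurable M"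
  unfolding gk_def normal_density_def by measurable

lemma gk_even: "gk a (- z) = gk a z"
  by (simp add: gk_def normal_density_def)

lemma gk_integrable: "a > 0 \<Longrightarrow> integrable lborel (gk a)"
  unfolding gk_def[abs_def] by (rule integrable_normal_density) simp

lemma gk_integral: "a > 0 \<Longrightarrow> (\<integral>z. gk a z \<partial>lborel) = 1"
  unfolding gk_def[abs_def] by (rule integral_normal_density) simp

lemma gk_var_integrable: "a > 0 \<Longrightarrow> integrable lborel (\<lambda>z. gk a z * z\<^sup>2)"
  using integrable_normal_moment[of "sqrt (2*a)" 0 2] unfolding gk_def by simp

lemma gk_var: "a > 0 \<Longrightarrow> (\<integral>z. gk a z * z\<^sup>2 \<partial>lborel) = 2 * a"
  using integral_normal_moment_even[of "sqrt (2*a)" 0 1] unfolding gk_def by simp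

lemma green_eq:
  assumes "tint D s t > 0"
  shows "green D d t s x = gk (tint D s t) x * kbar d t s"
proof -
  define a where "a = tint D s t"
  have a: "a > 0" using assms a_def by simp
  have "(4 * pi * a) powr (-1/2) = 1 / sqrt (2 * pi * (sqrt (2*a))\<^sup>2)"
  proof -
    have "(sqrt (2*a))\<^sup>2 = 2*a" using a by simp
    hence "1 / sqrt (2 * pi * (sqrt (2*a))\<^sup>2) = 1 / sqrt (4 * pi * a)" by simp
    moreover have "(4 * pi * a) powr (-1/2) = 1 / sqrt (4 * pi * a)"
      using a by (simp add: powr_minus_divide powr_half_sqrt)
    ultimately show ?thesis by simp
  qed
  moreover have "exp (- (x^2) / (4 * a) - tint d s t) = exp (- (x - 0)\<^sup>2 / (2 * (sqrt (2*a))\<^sup>2)) * exp (- tint d s t)"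
  proof -
    have sq: "(sqrt (2*a))\<^sup>2 = 2*a" using a by simp
    have "- (x^2) / (4 * a) - tint d s t = - (x - 0)\<^sup>2 / (2 * (sqrt (2*a))\<^sup>2) + (- tint d s t)"
      unfolding sq by simp
    thus ?thesis by (simp only: exp_add)
  qed
  ultimately show ?thesis
    unfolding green_def gk_def normal_density_def kbar_def a_def[symmetric] by simp
qed

lemma gconv_integrable:
  assumes a: "a > 0" and [measurable]: "g \<in> borel_measurable borel" and B: "\<forall>y. \<bar>g y\<bar> \<le> B"
  shows "integrable lborel (\<lambda>z. gk a z * g (x - z))"
proof (rule Bochner_Integration.integrable_bound[where M=lborel and f="\<lambda>z. B * gk a z"])
  show "integrable lborel (\<lambda>z. B * gk a z)" using gk_integrable[OF a] by simp
  show "(\<lambda>z. gk a z * g (x - z)) \<in> borel_measurable lborel" by measurable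
  have "B \<ge> 0" using B by (metis abs_ge_zero order_trans)
  show "AE z in lborel. norm (gk a z * g (x - z)) \<le> norm (B * gk a z)"
  proof (rule AE_I2)
    fix z
    have "\<bar>gk a z\<bar> * \<bar>g (x - z)\<bar> \<le> \<bar>gk a z\<bar> * B" using B by (simp add: mult_left_mono)
    thus "norm (gk a z * g (x - z)) \<le> norm (B * gk a z)" using \<open>B \<ge> 0\<close> by (simp add: abs_mult mult.commute)
  qed
qed

lemma gconv_lint:
  assumes a: "a > 0" and [measurable]: "g \<in> borel_measurable borel" and B: "\<forall>y. \<bar>g y\<bar> \<le> B"
  shows "gconv a g x = (\<integral>z. gk a z * g (x - z) \<partial>lborel)"
proof -
  let ?f = "\<lambda>y. gk a (x - y) * g y"
  have "integrable lborel (\<lambda>z. ?f (x + (-1) * z))"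
    using gconv_integrable[OF a _ B, of x] by simp
  hence fi: "integrable lborel ?f"
    using lborel_integrable_real_affine_iff[of "-1" ?f x] by simp
  have "integral UNIV ?f = (\<integral>y. ?f y \<partial>lborel)"
    using has_integral_integral_real[OF fi] by (rule integral_unique)
  also have "\<dots> = \<bar>-1\<bar> *\<^sub>R (\<integral>z. ?f (x + (-1) * z) \<partial>lborel)"
    by (rule lborel_integral_real_affine) simp
  finally show ?thesis using a by (simp add: gconv_def)
qed

lemma gconv_const:
  assumes "a \<ge> 0" shows "gconv a (\<lambda>_. c) x = c"
proof (cases "a = 0")
  case True thus ?thesis by (simp add: gconv_def)
next
  case False
  hence a: "a > 0" using assms by simp
  have "gconv a (\<lambda>_. c) x = (\<integral>z. gk a z * c \<partial>lborel)"
    by (rule gconv_lint[OF a, of _ "\<bar>c\<bar>"]) auto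
  also have "\<dots> = c" using gk_integral[OF a] by simp
  finally show ?thesis .
qed

lemma gconv_mono:
  assumes a: "a \<ge> 0" and [measurable]: "f \<in> borel_measurable borel" "g \<in> borel_measurable borel"
    and B: "\<forall>y. \<bar>f y\<bar> \<le> B" "\<forall>y. \<bar>g y\<bar> \<le> B" and le: "\<forall>y. f y \<le> g y"
  shows "gconv a f x \<le> gconv a g x"
proof (cases "a = 0")
  case True thus ?thesis using le by (simp add: gconv_def)
next
  case False
  hence a: "a > 0" using assms by simp
  have e1: "gconv a f x = (\<integral>z. gk a z * f (x - z) \<partial>lborel)" by (rule gconv_lint[OF a _ B(1)]) simp
  have e2: "gconv a g x = (\<integral>z. gk a z * g (x - z) \<partial>lborel)" by (rule gconv_lint[OF a _ B(2)]) simp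
  have i1: "integrable lborel (\<lambda>z. gk a z * f (x - z))" by (rule gconv_integrable[OF a _ B(1)]) simp
  have i2: "integrable lborel (\<lambda>z. gk a z * g (x - z))" by (rule gconv_integrable[OF a _ B(2)]) simp
  have "(\<integral>z. gk a z * f (x - z) \<partial>lborel) \<le> (\<integral>z. gk a z * g (x - z) \<partial>lborel)"
    using i1 i2 by (rule integral_mono) (simp add: le mult_left_mono)
  thus ?thesis using e1 e2 by simp
qed

lemma gconv_diff:
  assumes a: "a \<ge> 0" and [measurable]: "f \<in> borel_measurable borel" "g \<in> borel_measurable borel"
    and B: "\<forall>y. \<bar>f y\<bar> \<le> B" "\<forall>y. \<bar>g y\<bar> \<le> B"
  shows "gconv a (\<lambda>y. f y - g y) x = gconv a f x - gconv a g x"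
proof (cases "a = 0")
  case True thus ?thesis by (simp add: gconv_def)
next
  case False
  hence a: "a > 0" using assms by simp
  have B2: "\<forall>y. \<bar>f y - g y\<bar> \<le> 2 * B"
  proof
    fix y show "\<bar>f y - g y\<bar> \<le> 2 * B" using B[rule_format, of y] by linarith
  qed
  have e1: "gconv a f x = (\<integral>z. gk a z * f (x - z) \<partial>lborel)" by (rule gconv_lint[OF a _ B(1)]) simp
  have e2: "gconv a g x = (\<integral>z. gk a z * g (x - z) \<partial>lborel)" by (rule gconv_lint[OF a _ B(2)]) simp
  have e3: "gconv a (\<lambda>y. f y - g y) x = (\<integral>z. gk a z * (f (x - z) - g (x - z)) \<partial>lborel)"
    by (rule gconv_lint[OF a _ B2]) simp
  have i1: "integrable lborel (\<lambda>z. gk a z * f (x - z))" by (rule gconv_integrable[OF a _ B(1)]) simp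
  have i2: "integrable lborel (\<lambda>z. gk a z * g (x - z))" by (rule gconv_integrable[OF a _ B(2)]) simp
  have "(\<integral>z. gk a z * (f (x - z) - g (x - z)) \<partial>lborel) = (\<integral>z. gk a z * f (x - z) - gk a z * g (x - z) \<partial>lborel)"
    by (simp add: right_diff_distrib)
  also have "\<dots> = (\<integral>z. gk a z * f (x - z) \<partial>lborel) - (\<integral>z. gk a z * g (x - z) \<partial>lborel)"
    using i1 i2 by (rule Bochner_Integration.integral_diff)
  finally show ?thesis using e1 e2 e3 by simp
qed

lemma gconv_scale: "gconv a (\<lambda>y. c * f y) x = c * gconv a f x"
proof -
  have "integral UNIV (\<lambda>y. gk a (x - y) * (c * f y)) = integral UNIV (\<lambda>y. c *\<^sub>R (gk a (x - y) * f y))"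
    by (simp add: mult.left_commute)
  thus ?thesis by (simp add: gconv_def)
qed

lemma gconv_translate:
  assumes "a \<ge> 0" and [measurable]: "g \<in> borel_measurable borel" and B: "\<forall>y. \<bar>g y\<bar> \<le> B"
  shows "gconv a (\<lambda>y. g (y - c)) x = gconv a g (x - c)"
proof (cases "a = 0")
  case True thus ?thesis by (simp add: gconv_def)
next
  case False
  hence a: "a > 0" using assms by simp
  have B': "\<forall>y. \<bar>g (y - c)\<bar> \<le> B" using B by simp
  have e1: "gconv a g (x - c) = (\<integral>z. gk a z * g (x - c - z) \<partial>lborel)" by (rule gconv_lint[OF a _ B]) simp
  have e2: "gconv a (\<lambda>y. g (y - c)) x = (\<integral>z. gk a z * g (x - z - c) \<partial>lborel)" by (rule gconv_lint[OF a _ B']) simp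
  show ?thesis using e1 e2 by (simp add: diff_diff_eq add.commute)
qed

lemma gconv_local:
  assumes a0: "a \<ge> 0" and [measurable]: "f \<in> borel_measurable borel" "g \<in> borel_measurable borel"
    and B1: "\<forall>y. \<bar>f y\<bar> \<le> B1" "\<forall>y. \<bar>g y\<bar> \<le> B1"
    and B: "\<forall>y. \<bar>f y - g y\<bar> \<le> B" and R: "R > 0"
    and loc: "\<forall>y. \<bar>y\<bar> \<le> N + R \<longrightarrow> \<bar>f y - g y\<bar> \<le> \<eta>" and x: "\<bar>x\<bar> \<le> N"
  shows "\<bar>gconv a f x - gconv a g x\<bar> \<le> \<eta> + 2 * a * B / R\<^sup>2"
proof -
  have B0: "B \<ge> 0" using B by (metis abs_ge_zero order_trans)
  have e0: "\<eta> \<ge> 0" using loc[rule_format, of 0] x R by (metis abs_ge_zero abs_zero add_nonneg_nonneg less_imp_le order_trans)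
  show ?thesis
  proof (cases "a = 0")
    case True thus ?thesis using loc x R by (simp add: gconv_def)
  next
    case False
    hence a: "a > 0" using a0 by simp
    have B2: "\<forall>y. \<bar>f y - g y\<bar> \<le> 2 * B1"
    proof
      fix y show "\<bar>f y - g y\<bar> \<le> 2 * B1" using B1[rule_format, of y] by linarith
    qed
    have "gconv a f x - gconv a g x = gconv a (\<lambda>y. f y - g y) x"
      using gconv_diff[OF a0 _ _ B1] by simp
    also have "\<dots> = (\<integral>z. gk a z * (f (x - z) - g (x - z)) \<partial>lborel)"
      by (rule gconv_lint[OF a _ B2]) simp
    finally have eq: "gconv a f x - gconv a g x = (\<integral>z. gk a z * (f (x - z) - g (x - z)) \<partial>lborel)" .
    have pw: "\<bar>gk a z * (f (x - z) - g (x - z))\<bar> \<le> \<eta> * gk a z + (B / R\<^sup>2) * (gk a z * z\<^sup>2)" for z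
    proof -
      have "\<bar>f (x - z) - g (x - z)\<bar> \<le> \<eta> + (B / R\<^sup>2) * z\<^sup>2"
      proof (cases "\<bar>x - z\<bar> \<le> N + R")
        case True
        have "0 \<le> (B / R\<^sup>2) * z\<^sup>2" using B0 by simp
        thus ?thesis using loc True by fastforce
      next
        case False
        hence "\<bar>z\<bar> \<ge> R" using x by linarith
        hence "R\<^sup>2 \<le> z\<^sup>2" using R by (metis abs_le_square_iff abs_of_pos)
        hence "B \<le> (B / R\<^sup>2) * z\<^sup>2" using R B0
          by (simp add: field_simps mult_left_mono)
        thus ?thesis using B[rule_format, of "x - z"] e0 by linarith
      qed
      hence "gk a z * \<bar>f (x - z) - g (x - z)\<bar> \<le> gk a z * (\<eta> + (B / R\<^sup>2) * z\<^sup>2)"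
        by (simp add: mult_left_mono)
      moreover have "\<bar>gk a z * (f (x - z) - g (x - z))\<bar> = gk a z * \<bar>f (x - z) - g (x - z)\<bar>"
        by (simp add: abs_mult)
      ultimately show ?thesis by (simp add: algebra_simps)
    qed
    have i1: "integrable lborel (\<lambda>z. gk a z * (f (x - z) - g (x - z)))"
      by (rule gconv_integrable[OF a _ B2]) simp
    have i2: "integrable lborel (\<lambda>z. \<eta> * gk a z + (B / R\<^sup>2) * (gk a z * z\<^sup>2))"
      using gk_integrable[OF a] gk_var_integrable[OF a] by simp
    have "\<bar>gconv a f x - gconv a g x\<bar> \<le> (\<integral>z. \<bar>gk a z * (f (x - z) - g (x - z))\<bar> \<partial>lborel)"
      unfolding eq by (rule integral_abs_bound)
    also have "\<dots> \<le> (\<integral>z. \<eta> * gk a z + (B / R\<^sup>2) * (gk a z * z\<^sup>2) \<partial>lborel)"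
      using i1 i2 pw by (intro integral_mono) auto
    also have "\<dots> = \<eta> * 1 + (B / R\<^sup>2) * (2 * a)"
      using gk_integrable[OF a] gk_var_integrable[OF a] gk_integral[OF a] gk_var[OF a] by simp
    finally show ?thesis by (simp add: mult.commute mult.left_commute)
  qed
qed

lemma meas_app2:
  assumes "case_prod F \<in> measurable (M1 \<Otimes>\<^sub>M M2) K" "f \<in> measurable N M1" "g \<in> measurable N M2"
  shows "(\<lambda>w. F (f w) (g w)) \<in> measurable N K"
proof -
  have "(\<lambda>w. case_prod F (f w, g w)) \<in> measurable N K"
    using assms by measurable
  thus ?thesis by simp
qed

lemma gconv_meas:
  fixes A :: "real \<Rightarrow> real" and F :: "real \<Rightarrow> real \<Rightarrow> real"
  assumes [measurable]: "A \<in> borel_measurable borel" and A0: "\<forall>s. A s \<ge> 0"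
    and [measurable]: "case_prod F \<in> borel_measurable (borel \<Otimes>\<^sub>M borel)"
    and Bex: "\<forall>s. \<exists>B. \<forall>y. \<bar>F s y\<bar> \<le> B"
  shows "(\<lambda>(s, x). gconv (A s) (F s) x) \<in> borel_measurable (borel \<Otimes>\<^sub>M borel)"
proof -
  have eq: "(\<lambda>(s, x). gconv (A s) (F s) x) =
     (\<lambda>(s, x). if A s = 0 then F s x else (\<integral>z. gk (A s) z * F s (x - z) \<partial>lborel))"
  proof (intro ext, clarify)
    fix s x
    show "gconv (A s) (F s) x = (if A s = 0 then F s x else (\<integral>z. gk (A s) z * F s (x - z) \<partial>lborel))"
    proof (cases "A s = 0")
      case True thus ?thesis by (simp add: gconv_def)
    next
      case False
      hence a: "A s > 0" using A0 by (metis less_eq_real_def)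
      have "F s \<in> borel_measurable borel" by measurable
      moreover obtain B where "\<forall>y. \<bar>F s y\<bar> \<le> B" using Bex by blast
      ultimately show ?thesis using gconv_lint[OF a _ , of "F s" B x] False by simp
    qed
  qed
  have FF: "(\<lambda>w. F (fst (fst w)) (snd (fst w) - snd w)) \<in> borel_measurable ((borel \<Otimes>\<^sub>M borel) \<Otimes>\<^sub>M lborel)"
    by (rule meas_app2[of F borel borel]) measurable
  have [measurable]: "(\<lambda>((s, x), z). gk (A s) z * F s (x - z)) \<in> borel_measurable ((borel \<Otimes>\<^sub>M borel) \<Otimes>\<^sub>M lborel)"
    unfolding case_prod_beta' using FF by measurable
  have "(\<lambda>w. \<integral>z. (\<lambda>((s, x), z). gk (A s) z * F s (x - z)) (w, z) \<partial>lborel) \<in> borel_measurable (borel \<Otimes>\<^sub>M borel)"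
    by (rule lborel.borel_measurable_lebesgue_integral) simp
  hence [measurable]: "(\<lambda>(s, x). \<integral>z. gk (A s) z * F s (x - z) \<partial>lborel) \<in> borel_measurable (borel \<Otimes>\<^sub>M borel)"
    by (simp add: case_prod_beta')
  show ?thesis unfolding eq by measurable
qed

lemma cont_integrable_Icc: "continuous_on UNIV (D::real\<Rightarrow>real) \<Longrightarrow> D integrable_on {u..v}"
  using integrable_continuous_interval[of "u" v D] continuous_on_subset by (metis interval_cbox subset_UNIV)

lemma tint_nonneg: "\<forall>t. D t \<ge> 0 \<Longrightarrow> tint D u v \<ge> 0"
  unfolding tint_def
  by (cases "D integrable_on {u..v}") (auto intro: integral_nonneg simp: not_integrable_integral)

lemma tint_empty: "v < u \<Longrightarrow> tint D u v = 0"
  unfolding tint_def by simp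

lemma tint_mono:
  assumes "continuous_on UNIV D" "\<forall>t. D t \<ge> 0" "lo \<le> u" "v \<le> hi"
  shows "tint D u v \<le> tint D lo hi"
proof (cases "u \<le> v")
  case True
  show ?thesis unfolding tint_def
    using assms True by (intro integral_subset_le cont_integrable_Icc) auto
next
  case False thus ?thesis using tint_nonneg[OF assms(2)] tint_empty[of v u D] by simp
qed

lemma tint_add:
  assumes "continuous_on UNIV D" "a \<le> b" "b \<le> c"
  shows "tint D a b + tint D b c = tint D a c"
  unfolding tint_def using assms by (intro Henstock_Kurzweil_Integration.integral_combine) (auto intro: cont_integrable_Icc)

lemma tint_meas:
  assumes "continuous_on UNIV D"
  shows "(\<lambda>(u, v). tint D u v) \<in> borel_measurable (borel \<Otimes>\<^sub>M borel)"
proof -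
  have Dm[measurable]: "D \<in> borel_measurable borel" using assms by (rule borel_measurable_continuous_onI)
  have eq: "tint D u v = (\<integral>y. (if u \<le> y \<and> y \<le> v then D y else 0) \<partial>lborel)" for u v
  proof -
    have si: "set_integrable lborel {u..v} D"
      by (rule borel_integrable_atLeastAtMost') (use assms continuous_on_subset in blast)
    have "tint D u v = (LINT x : {u..v} | lborel. D x)"
      unfolding tint_def using set_borel_integral_eq_integral(2)[OF si] by simp
    also have "\<dots> = (\<integral>y. (if u \<le> y \<and> y \<le> v then D y else 0) \<partial>lborel)"
      unfolding set_lebesgue_integral_def by (intro Bochner_Integration.integral_cong) (auto simp: indicator_def)
    finally show ?thesis .
  qed
  have [measurable]: "(\<lambda>((u, v), y). if u \<le> y \<and> y \<le> v then D y else 0) \<in> borel_measurable ((borel \<Otimes>\<^sub>M borel) \<Otimes>\<^sub>M lborel)"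
    unfolding case_prod_beta' by measurable
  have "(\<lambda>w. \<integral>y. (\<lambda>((u, v), y). if u \<le> y \<and> y \<le> v then D y else 0) (w, y) \<partial>lborel) \<in> borel_measurable (borel \<Otimes>\<^sub>M borel)"
    by (rule lborel.borel_measurable_lebesgue_integral) simp
  thus ?thesis unfolding eq by (simp add: case_prod_beta')
qed

lemma kbar_pos: "kbar d t s > 0" by (simp add: kbar_def)

lemma kbar_le1: "\<forall>t. d t \<ge> 0 \<Longrightarrow> kbar d t s \<le> 1"
  unfolding kbar_def using tint_nonneg[of d s t] by simp

lemma kconv_eq:
  assumes "\<forall>t. D t \<ge> 0"
  shows "kconv D d t s g x = kbar d t s * gconv (tint D s t) g x"
proof (cases "tint D s t = 0")
  case True thus ?thesis by (simp add: kconv_def gconv_def)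
next
  case False
  hence pos: "tint D s t > 0" using tint_nonneg[OF assms, of s t] by simp
  have "integral UNIV (\<lambda>y. green D d t s (x - y) * g y) = integral UNIV (\<lambda>y. kbar d t s *\<^sub>R (gk (tint D s t) (x - y) * g y))"
    by (simp add: green_eq[OF pos] mult_ac)
  thus ?thesis using False by (simp add: kconv_def gconv_def)
qed



locale QL =
  fixes T ta tb ustar :: real and DM DI dM dI tau p h :: "real \<Rightarrow> real"
  assumes cDM: "continuous_on UNIV DM" and cDI: "continuous_on UNIV DI"
    and cdM: "continuous_on UNIV dM" and cdI: "continuous_on UNIV dI"
    and ctau: "continuous_on UNIV tau" and cp: "continuous_on UNIV p"
    and cdtau: "continuous_on UNIV (deriv tau)"
    and DM0: "\<forall>t. DM t \<ge> 0" and DI0: "\<forall>t. DI t \<ge> 0"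
    and dM0: "\<forall>t. dM t \<ge> 0" and dI0: "\<forall>t. dI t \<ge> 0" and p0: "\<forall>t. p t \<ge> 0"
    and dtau1: "\<forall>t. deriv tau t < 1"
    and ch: "continuous_on {0..} h" and h0: "\<forall>z \<ge> 0. h z \<ge> 0"
    and hmono: "mono_on {0..ustar} h"
    and us: "ustar > 0" and tab: "ta \<le> tb"
    and hd: "\<forall>z \<ge> 0. \<forall>l \<in> {0<..<1}. h (l * z) \<ge> l * h z"
begin

definition adm :: "(real \<Rightarrow> real) \<Rightarrow> bool" where
  "adm \<phi> \<longleftrightarrow> \<phi> \<in> borel_measurable borel \<and> (\<forall>y. 0 \<le> \<phi> y \<and> \<phi> y \<le> ustar)"

definition Aop :: "real \<Rightarrow> (real \<Rightarrow> real) \<Rightarrow> real \<Rightarrow> real" where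
  "Aop s \<phi> = kconv DM dM (s - tau s) 0 \<phi>"

definition Rs :: "real \<Rightarrow> (real \<Rightarrow> real) \<Rightarrow> real \<Rightarrow> real" where
  "Rs s \<phi> = Rop DI dI tau p h s (Aop s \<phi>)"

definition Ws :: "real \<Rightarrow> (real \<Rightarrow> real) \<Rightarrow> real \<Rightarrow> real" where
  "Ws s \<phi> x = kconv DM dM T s (Rs s \<phi>) x"

definition hc :: "real \<Rightarrow> real" where "hc x = h (max 0 x)"

lemma hc_cont: "continuous_on UNIV hc"
proof -
  have "continuous_on UNIV (\<lambda>x. max 0 x :: real)" by (intro continuous_intros)
  moreover have "(\<lambda>x. max 0 x :: real) ` UNIV \<subseteq> {0..}" by auto
  ultimately show ?thesis unfolding hc_def using continuous_on_compose2[OF ch] by blast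
qed

lemma hc_meas[measurable]: "hc \<in> borel_measurable borel"
  using hc_cont by (rule borel_measurable_continuous_onI)

lemma meas_basic[measurable]: "DM \<in> borel_measurable borel" "DI \<in> borel_measurable borel"
  "dM \<in> borel_measurable borel" "dI \<in> borel_measurable borel" "tau \<in> borel_measurable borel"
  "p \<in> borel_measurable borel" "deriv tau \<in> borel_measurable borel"
  using cDM cDI cdM cdI ctau cp cdtau by (auto intro: borel_measurable_continuous_onI)

lemma tintM_meas[measurable (raw)]:
  assumes [measurable]: "f \<in> borel_measurable M" "g \<in> borel_measurable M"
  shows "(\<lambda>w. tint DM (f w) (g w)) \<in> borel_measurable M"
  by (rule meas_app2[OF tint_meas[OF cDM]]) measurable

lemma tintI_meas[measurable (raw)]:
  assumes [measurable]: "f \<in> borel_measurable M" "g \<in> borel_measurable M"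
  shows "(\<lambda>w. tint DI (f w) (g w)) \<in> borel_measurable M"
  by (rule meas_app2[OF tint_meas[OF cDI]]) measurable

lemma tintdM_meas[measurable (raw)]:
  assumes [measurable]: "f \<in> borel_measurable M" "g \<in> borel_measurable M"
  shows "(\<lambda>w. tint dM (f w) (g w)) \<in> borel_measurable M"
  by (rule meas_app2[OF tint_meas[OF cdM]]) measurable

lemma tintdI_meas[measurable (raw)]:
  assumes [measurable]: "f \<in> borel_measurable M" "g \<in> borel_measurable M"
  shows "(\<lambda>w. tint dI (f w) (g w)) \<in> borel_measurable M"
  by (rule meas_app2[OF tint_meas[OF cdI]]) measurable

lemma Aop_eq: "Aop s \<phi> y = kbar dM (s - tau s) 0 * gconv (tint DM 0 (s - tau s)) \<phi> y"
  unfolding Aop_def by (rule kconv_eq[OF DM0])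

lemma gconv_range:
  assumes "a \<ge> 0" "\<phi> \<in> borel_measurable borel" "\<forall>y. lo \<le> \<phi> y \<and> \<phi> y \<le> hi"
  shows "lo \<le> gconv a \<phi> x \<and> gconv a \<phi> x \<le> hi"
proof -
  have B: "\<forall>y. \<bar>\<phi> y\<bar> \<le> \<bar>lo\<bar> + \<bar>hi\<bar>"
  proof
    fix y show "\<bar>\<phi> y\<bar> \<le> \<bar>lo\<bar> + \<bar>hi\<bar>" using assms(3)[rule_format, of y] by linarith
  qed
  have Bl: "\<forall>y. \<bar>lo\<bar> \<le> \<bar>lo\<bar> + \<bar>hi\<bar>" "\<forall>y. \<bar>hi\<bar> \<le> \<bar>lo\<bar> + \<bar>hi\<bar>" by auto
  have "gconv a (\<lambda>_. lo) x \<le> gconv a \<phi> x"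
    using assms by (intro gconv_mono[OF assms(1) _ _ _ B]) auto
  moreover have "gconv a \<phi> x \<le> gconv a (\<lambda>_. hi) x"
    using assms by (intro gconv_mono[OF assms(1) _ _ B]) auto
  ultimately show ?thesis using gconv_const[OF assms(1)] by simp
qed

lemma tDM0[simp]: "0 \<le> tint DM u v" using tint_nonneg[OF DM0] .
lemma tDI0[simp]: "0 \<le> tint DI u v" using tint_nonneg[OF DI0] .

definition Hm :: real where "Hm = (SOME M. \<forall>z\<in>{0..ustar}. h z \<le> M)"

lemma h_le_Hm: "z \<in> {0..ustar} \<Longrightarrow> h z \<le> Hm"
proof -
  have "compact (h ` {0..ustar})"
    by (rule compact_continuous_image) (rule continuous_on_subset[OF ch], auto)
  then obtain M where "\<forall>w\<in>h ` {0..ustar}. norm w \<le> M" using compact_imp_bounded bounded_iff by metis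
  hence "\<exists>M. \<forall>z\<in>{0..ustar}. h z \<le> M" by (intro exI[of _ M]) (auto dest: abs_le_D1)
  hence "\<forall>z\<in>{0..ustar}. h z \<le> Hm" unfolding Hm_def by (rule someI_ex)
  thus "z \<in> {0..ustar} \<Longrightarrow> h z \<le> Hm" by blast
qed

lemma Hm0: "Hm \<ge> 0" using h_le_Hm[of 0] h0 us by fastforce

lemma adm_meas: "adm \<phi> \<Longrightarrow> \<phi> \<in> borel_measurable borel"
  unfolding adm_def by simp

lemma kbar_dM_meas[measurable (raw)]:
  assumes [measurable]: "f \<in> borel_measurable M" "g \<in> borel_measurable M"
  shows "(\<lambda>w. kbar dM (f w) (g w)) \<in> borel_measurable M"
  unfolding kbar_def by measurable

lemma kbar_dI_meas[measurable (raw)]: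
  assumes [measurable]: "f \<in> borel_measurable M" "g \<in> borel_measurable M"
  shows "(\<lambda>w. kbar dI (f w) (g w)) \<in> borel_measurable M"
  unfolding kbar_def by measurable

lemma A_range: "adm \<phi> \<Longrightarrow> 0 \<le> Aop s \<phi> y \<and> Aop s \<phi> y \<le> ustar"
proof -
  assume ad: "adm \<phi>"
  have g: "0 \<le> gconv (tint DM 0 (s - tau s)) \<phi> y \<and> gconv (tint DM 0 (s - tau s)) \<phi> y \<le> ustar"
    using ad unfolding adm_def by (intro gconv_range tint_nonneg DM0) auto
  have k: "0 < kbar dM (s - tau s) 0" "kbar dM (s - tau s) 0 \<le> 1" using kbar_pos kbar_le1[OF dM0] by auto
  have "kbar dM (s - tau s) 0 * gconv (tint DM 0 (s - tau s)) \<phi> y \<le> 1 * ustar"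
    using g k by (intro mult_mono) auto
  thus ?thesis unfolding Aop_eq using g k by simp
qed

lemma A_meas[measurable]: "adm \<phi> \<Longrightarrow> (\<lambda>(s, y). Aop s \<phi> y) \<in> borel_measurable (borel \<Otimes>\<^sub>M borel)"
proof -
  assume ad: "adm \<phi>"
  note [measurable] = adm_meas[OF ad]
  have [measurable]: "(\<lambda>(s, y). gconv (tint DM 0 (s - tau s)) ((\<lambda>s y. \<phi> y) s) y) \<in> borel_measurable (borel \<Otimes>\<^sub>M borel)"
  proof (rule gconv_meas)
    show "(\<lambda>(s, y). \<phi> y) \<in> borel_measurable (borel \<Otimes>\<^sub>M borel)" by measurable
    show "\<forall>s. \<exists>B. \<forall>y. \<bar>\<phi> y\<bar> \<le> B" using ad unfolding adm_def by (metis abs_of_nonneg)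
  qed (auto intro!: tint_nonneg DM0)
  show ?thesis unfolding Aop_eq by measurable
qed

definition Fs :: "real \<Rightarrow> (real \<Rightarrow> real) \<Rightarrow> real \<Rightarrow> real" where
  "Fs s \<phi> y = p (s - tau s) * h (Aop s \<phi> y)"

lemma Fs_hc: "adm \<phi> \<Longrightarrow> Fs s \<phi> y = p (s - tau s) * hc (Aop s \<phi> y)"
  unfolding Fs_def hc_def using A_range by (simp add: max_def)

lemma Fs_range: "adm \<phi> \<Longrightarrow> 0 \<le> Fs s \<phi> y \<and> Fs s \<phi> y \<le> p (s - tau s) * Hm"
  unfolding Fs_def using A_range[of \<phi> s y] h0 h_le_Hm[of "Aop s \<phi> y"] p0
  by (auto intro: mult_left_mono)

lemma Fs_meas[measurable]: "adm \<phi> \<Longrightarrow> (\<lambda>(s, y). Fs s \<phi> y) \<in> borel_measurable (borel \<Otimes>\<^sub>M borel)"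
proof -
  assume ad: "adm \<phi>"
  note [measurable] = adm_meas[OF ad]
  have [measurable]: "(\<lambda>w. Aop (fst w) \<phi> (snd w)) \<in> borel_measurable (borel \<Otimes>\<^sub>M borel)"
    using A_meas[OF ad] by (simp add: case_prod_beta')
  have "(\<lambda>w. p (fst w - tau (fst w)) * hc (Aop (fst w) \<phi> (snd w))) \<in> borel_measurable (borel \<Otimes>\<^sub>M borel)"
    by measurable
  thus ?thesis using Fs_hc[OF ad] by (simp add: case_prod_beta')
qed

lemma Rs_eq: "Rs s \<phi> y = (1 - deriv tau s) * kbar dI s (s - tau s) * gconv (tint DI (s - tau s) s) (Fs s \<phi>) y"
  unfolding Rs_def Rop_def kconv_eq[OF DI0] Fs_def[abs_def] by simp

lemma Rs_range: "adm \<phi> \<Longrightarrow> 0 \<le> Rs s \<phi> y \<and> Rs s \<phi> y \<le> (1 - deriv tau s) * (p (s - tau s) * Hm)"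
proof -
  assume ad: "adm \<phi>"
  note [measurable] = adm_meas[OF ad]
  have [measurable]: "Fs s \<phi> \<in> borel_measurable borel"
    using Fs_meas[OF ad] by measurable
  have g: "0 \<le> gconv (tint DI (s - tau s) s) (Fs s \<phi>) y \<and> gconv (tint DI (s - tau s) s) (Fs s \<phi>) y \<le> p (s - tau s) * Hm"
    using Fs_range[OF ad] by (intro gconv_range tint_nonneg DI0) auto
  have k: "0 < kbar dI s (s - tau s)" "kbar dI s (s - tau s) \<le> 1" using kbar_pos kbar_le1[OF dI0] by auto
  have c: "0 \<le> 1 - deriv tau s" using dtau1 by (simp add: less_imp_le)
  have "kbar dI s (s - tau s) * gconv (tint DI (s - tau s) s) (Fs s \<phi>) y \<le> 1 * (p (s - tau s) * Hm)"
    using g k by (intro mult_mono) auto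
  hence "(1 - deriv tau s) * (kbar dI s (s - tau s) * gconv (tint DI (s - tau s) s) (Fs s \<phi>) y) \<le> (1 - deriv tau s) * (p (s - tau s) * Hm)"
    using c by (simp add: mult_left_mono)
  thus ?thesis unfolding Rs_eq using g k c by (simp add: mult.assoc)
qed

lemma Rs_meas[measurable]: "adm \<phi> \<Longrightarrow> (\<lambda>(s, y). Rs s \<phi> y) \<in> borel_measurable (borel \<Otimes>\<^sub>M borel)"
proof -
  assume ad: "adm \<phi>"
  note [measurable] = adm_meas[OF ad]
  have bnd: "\<forall>s. \<exists>B. \<forall>y. \<bar>Fs s \<phi> y\<bar> \<le> B"
    using Fs_range[OF ad] by (metis abs_of_nonneg)
  have [measurable]: "(\<lambda>(s, y). gconv (tint DI (s - tau s) s) (Fs s \<phi>) y) \<in> borel_measurable (borel \<Otimes>\<^sub>M borel)"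
    by (rule gconv_meas[OF _ _ Fs_meas[OF ad] bnd]) (auto intro!: tint_nonneg DI0)
  show ?thesis unfolding Rs_eq by measurable
qed

lemma Ws_eq: "Ws s \<phi> x = kbar dM T s * gconv (tint DM s T) (Rs s \<phi>) x"
  unfolding Ws_def by (rule kconv_eq[OF DM0])

lemma Ws_range: "adm \<phi> \<Longrightarrow> 0 \<le> Ws s \<phi> x \<and> Ws s \<phi> x \<le> (1 - deriv tau s) * (p (s - tau s) * Hm)"
proof -
  assume ad: "adm \<phi>"
  note [measurable] = adm_meas[OF ad]
  have [measurable]: "Rs s \<phi> \<in> borel_measurable borel"
    using Rs_meas[OF ad] by measurable
  have g: "0 \<le> gconv (tint DM s T) (Rs s \<phi>) x \<and> gconv (tint DM s T) (Rs s \<phi>) x \<le> (1 - deriv tau s) * (p (s - tau s) * Hm)"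
    using Rs_range[OF ad] by (intro gconv_range tint_nonneg DM0) auto
  have k: "0 < kbar dM T s" "kbar dM T s \<le> 1" using kbar_pos kbar_le1[OF dM0] by auto
  have "kbar dM T s * gconv (tint DM s T) (Rs s \<phi>) x \<le> 1 * ((1 - deriv tau s) * (p (s - tau s) * Hm))"
    using g k by (intro mult_mono) auto
  thus ?thesis unfolding Ws_eq using g k by simp
qed

lemma Ws_meas[measurable]: "adm \<phi> \<Longrightarrow> (\<lambda>(s, x). Ws s \<phi> x) \<in> borel_measurable (borel \<Otimes>\<^sub>M borel)"
proof -
  assume ad: "adm \<phi>"
  note [measurable] = adm_meas[OF ad]
  have bnd: "\<forall>s. \<exists>B. \<forall>y. \<bar>Rs s \<phi> y\<bar> \<le> B"
    using Rs_range[OF ad] by (metis abs_of_nonneg)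
  have [measurable]: "(\<lambda>(s, x). gconv (tint DM s T) (Rs s \<phi>) x) \<in> borel_measurable (borel \<Otimes>\<^sub>M borel)"
    by (rule gconv_meas[OF _ _ Rs_meas[OF ad] bnd]) (auto intro!: tint_nonneg DM0)
  show ?thesis unfolding Ws_eq by measurable
qed

lemma cbound: "continuous_on UNIV (f::real \<Rightarrow> real) \<Longrightarrow> \<exists>K. \<forall>s\<in>{ta..tb}. \<bar>f s\<bar> \<le> K"
proof -
  assume c: "continuous_on UNIV f"
  have "compact (f ` {ta..tb})"
    by (rule compact_continuous_image) (rule continuous_on_subset[OF c], auto)
  then obtain M where "\<forall>w\<in>f ` {ta..tb}. norm w \<le> M" using compact_imp_bounded bounded_iff by metis
  thus ?thesis by (intro exI[of _ M]) auto
qed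

definition Kb :: real where
  "Kb = (SOME K. \<forall>s\<in>{ta..tb}. \<bar>1 - deriv tau s\<bar> \<le> K \<and> \<bar>p (s - tau s)\<bar> \<le> K \<and> \<bar>s - tau s\<bar> \<le> K \<and> \<bar>s\<bar> \<le> K)"

lemma Kb: "s \<in> {ta..tb} \<Longrightarrow> \<bar>1 - deriv tau s\<bar> \<le> Kb \<and> \<bar>p (s - tau s)\<bar> \<le> Kb \<and> \<bar>s - tau s\<bar> \<le> Kb \<and> \<bar>s\<bar> \<le> Kb"
proof -
  have c1: "continuous_on UNIV (\<lambda>s. 1 - deriv tau s)" using cdtau by (intro continuous_intros)
  have c3: "continuous_on UNIV (\<lambda>s. s - tau s)" using ctau by (intro continuous_intros)
  have c2: "continuous_on UNIV (\<lambda>s. p (s - tau s))"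
    using continuous_on_compose2[OF cp c3] by simp
  have c4: "continuous_on UNIV (\<lambda>s::real. s)" by (intro continuous_intros)
  obtain K1 K2 K3 K4 where "\<forall>s\<in>{ta..tb}. \<bar>1 - deriv tau s\<bar> \<le> K1" "\<forall>s\<in>{ta..tb}. \<bar>p (s - tau s)\<bar> \<le> K2"
    "\<forall>s\<in>{ta..tb}. \<bar>s - tau s\<bar> \<le> K3" "\<forall>s\<in>{ta..tb}. \<bar>s\<bar> \<le> K4"
    using cbound[OF c1] cbound[OF c2] cbound[OF c3] cbound[OF c4] by metis
  hence "\<exists>K. \<forall>s\<in>{ta..tb}. \<bar>1 - deriv tau s\<bar> \<le> K \<and> \<bar>p (s - tau s)\<bar> \<le> K \<and> \<bar>s - tau s\<bar> \<le> K \<and> \<bar>s\<bar> \<le> K"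
    by (intro exI[of _ "max (max K1 K2) (max K3 K4)"]) (auto simp: le_max_iff_disj)
  hence "\<forall>s\<in>{ta..tb}. \<bar>1 - deriv tau s\<bar> \<le> Kb \<and> \<bar>p (s - tau s)\<bar> \<le> Kb \<and> \<bar>s - tau s\<bar> \<le> Kb \<and> \<bar>s\<bar> \<le> Kb"
    unfolding Kb_def by (rule someI_ex)
  thus "s \<in> {ta..tb} \<Longrightarrow> ?thesis" by blast
qed

lemma Kb0: "Kb \<ge> 0" using Kb[of ta] tab by fastforce

definition Cw :: real where "Cw = Kb * (Kb * Hm)"

lemma Cw0: "Cw \<ge> 0" unfolding Cw_def using Kb0 Hm0 by simp

lemma Ws_bnd: "adm \<phi> \<Longrightarrow> s \<in> {ta..tb} \<Longrightarrow> 0 \<le> Ws s \<phi> x \<and> Ws s \<phi> x \<le> Cw"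
proof -
  assume ad: "adm \<phi>" and s: "s \<in> {ta..tb}"
  have "(1 - deriv tau s) * (p (s - tau s) * Hm) \<le> Kb * (Kb * Hm)"
    using Kb[OF s] Hm0 p0 dtau1 by (intro mult_mono) (auto simp: less_imp_le)
  thus ?thesis using Ws_range[OF ad, of s x] unfolding Cw_def by linarith
qed

lemma Ws_meas_s[measurable]: "adm \<phi> \<Longrightarrow> (\<lambda>s. Ws s \<phi> x) \<in> borel_measurable borel"
proof -
  assume ad: "adm \<phi>"
  have "(\<lambda>s. (\<lambda>(s, x). Ws s \<phi> x) (s, x)) \<in> borel_measurable borel"
    using Ws_meas[OF ad] by measurable
  thus ?thesis by simp
qed

lemma set_int_bounded:
  fixes f :: "real \<Rightarrow> real"
  assumes [measurable]: "f \<in> borel_measurable borel" and "\<forall>s\<in>{ta..tb}. \<bar>f s\<bar> \<le> B"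
  shows "f integrable_on {ta..tb}"
proof -
  have "set_integrable lborel {ta..tb} f"
    unfolding set_integrable_def
    by (rule integrableI_bounded_set_indicator[where B=B]) (use assms in \<open>auto simp: emeasure_lborel_Icc_eq\<close>)
  thus ?thesis by (rule set_borel_integral_eq_integral(1))
qed

lemma Ws_int: "adm \<phi> \<Longrightarrow> (\<lambda>s. Ws s \<phi> x) integrable_on {ta..tb}"
  using Ws_bnd[of \<phi> _ x] by (intro set_int_bounded[where B=Cw] Ws_meas_s) auto

lemma Q_eq: "Qop T DM dM DI dI tau p h ta tb \<phi> x = kconv DM dM T 0 \<phi> x + integral {ta..tb} (\<lambda>s. Ws s \<phi> x)"
  unfolding Qop_def Ws_def Rs_def Aop_def ..

lemma cgconv_mono:
  assumes "a \<ge> 0" "c \<ge> 0" "f \<in> borel_measurable borel" "g \<in> borel_measurable borel"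
    "\<forall>y. \<bar>f y\<bar> \<le> B" "\<forall>y. \<bar>g y\<bar> \<le> B" "\<forall>y. f y \<le> g y"
  shows "c * gconv a f x \<le> c * gconv a g x"
  using gconv_mono[OF assms(1,3,4,5,6,7)] assms(2) by (simp add: mult_left_mono)

lemma Fs_meas1: "adm \<phi> \<Longrightarrow> Fs s \<phi> \<in> borel_measurable borel"
proof -
  assume ad: "adm \<phi>"
  have "(\<lambda>y. (\<lambda>(s, y). Fs s \<phi> y) (s, y)) \<in> borel_measurable borel" using Fs_meas[OF ad] by measurable
  thus ?thesis by simp
qed

lemma Rs_meas1: "adm \<phi> \<Longrightarrow> Rs s \<phi> \<in> borel_measurable borel"
proof -
  assume ad: "adm \<phi>"
  have "(\<lambda>y. (\<lambda>(s, y). Rs s \<phi> y) (s, y)) \<in> borel_measurable borel" using Rs_meas[OF ad] by measurable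
  thus ?thesis by simp
qed

lemma Fs_abs: "adm \<phi> \<Longrightarrow> \<bar>Fs s \<phi> y\<bar> \<le> p (s - tau s) * Hm"
  using Fs_range[of \<phi> s y] by simp

lemma Rs_abs: "adm \<phi> \<Longrightarrow> \<bar>Rs s \<phi> y\<bar> \<le> (1 - deriv tau s) * (p (s - tau s) * Hm)"
  using Rs_range[of \<phi> s y] by simp

lemma c_nonneg: "0 \<le> (1 - deriv tau s) * kbar dI s (s - tau s)"
  using dtau1 kbar_pos[of dI s "s - tau s"] by (simp add: less_imp_le)

lemma A_mono: "adm \<phi> \<Longrightarrow> adm \<psi> \<Longrightarrow> \<forall>y. \<phi> y \<le> \<psi> y \<Longrightarrow> Aop s \<phi> y \<le> Aop s \<psi> y"
  unfolding Aop_eq adm_def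
  by (rule cgconv_mono[where B=ustar]) (auto intro: less_imp_le kbar_pos)

lemma Ws_mono: "adm \<phi> \<Longrightarrow> adm \<psi> \<Longrightarrow> \<forall>y. \<phi> y \<le> \<psi> y \<Longrightarrow> Ws s \<phi> x \<le> Ws s \<psi> x"
proof -
  assume a1: "adm \<phi>" and a2: "adm \<psi>" and le: "\<forall>y. \<phi> y \<le> \<psi> y"
  have F: "\<forall>y. Fs s \<phi> y \<le> Fs s \<psi> y"
  proof
    fix y
    have "h (Aop s \<phi> y) \<le> h (Aop s \<psi> y)"
      using hmono A_range[OF a1, of s y] A_range[OF a2, of s y] A_mono[OF a1 a2 le, of s y]
      by (auto simp: mono_on_def)
    thus "Fs s \<phi> y \<le> Fs s \<psi> y" unfolding Fs_def using p0 by (simp add: mult_left_mono)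
  qed
  have R: "\<forall>y. Rs s \<phi> y \<le> Rs s \<psi> y"
    unfolding Rs_eq mult.assoc[symmetric]
    using F Fs_abs[OF a1] Fs_abs[OF a2] Fs_meas1[OF a1] Fs_meas1[OF a2]
    by (intro allI cgconv_mono[where B="p (s - tau s) * Hm"] c_nonneg tint_nonneg DI0) auto
  show ?thesis unfolding Ws_eq
    using R Rs_abs[OF a1] Rs_abs[OF a2] Rs_meas1[OF a1] Rs_meas1[OF a2]
    by (intro cgconv_mono[where B="(1 - deriv tau s) * (p (s - tau s) * Hm)"] tint_nonneg DM0)
       (auto intro: less_imp_le kbar_pos)
qed

lemma Q_mono:
  assumes a1: "adm \<phi>" and a2: "adm \<psi>" and le: "\<forall>y. \<phi> y \<le> \<psi> y"
  shows "Qop T DM dM DI dI tau p h ta tb \<phi> x \<le> Qop T DM dM DI dI tau p h ta tb \<psi> x"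
proof -
  have "kconv DM dM T 0 \<phi> x \<le> kconv DM dM T 0 \<psi> x"
    unfolding kconv_eq[OF DM0] using a1 a2 le unfolding adm_def
    by (intro cgconv_mono[where B=ustar]) (auto intro: less_imp_le kbar_pos)
  moreover have "integral {ta..tb} (\<lambda>s. Ws s \<phi> x) \<le> integral {ta..tb} (\<lambda>s. Ws s \<psi> x)"
    using Ws_int[OF a1] Ws_int[OF a2] Ws_mono[OF a1 a2 le] by (rule integral_le)
  ultimately show ?thesis unfolding Q_eq by simp
qed

lemma adm_scale: "adm \<phi> \<Longrightarrow> l \<in> {0<..<1} \<Longrightarrow> adm (\<lambda>y. l * \<phi> y)"
  unfolding adm_def by (auto simp: mult_le_one mult_nonneg_nonneg intro: order_trans[OF mult_left_le_one_le])

lemma A_scale: "Aop s (\<lambda>y. l * \<phi> y) y = l * Aop s \<phi> y"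
  unfolding Aop_eq gconv_scale by simp

lemma Ws_scale:
  assumes ad: "adm \<phi>" and l: "l \<in> {0<..<1}"
  shows "l * Ws s \<phi> x \<le> Ws s (\<lambda>y. l * \<phi> y) x"
proof -
  have adl: "adm (\<lambda>y. l * \<phi> y)" by (rule adm_scale[OF ad l])
  have F: "\<forall>y. l * Fs s \<phi> y \<le> Fs s (\<lambda>y. l * \<phi> y) y"
  proof
    fix y
    have "l * h (Aop s \<phi> y) \<le> h (l * Aop s \<phi> y)" using hd A_range[OF ad, of s y] l by auto
    thus "l * Fs s \<phi> y \<le> Fs s (\<lambda>y. l * \<phi> y) y"
      unfolding Fs_def A_scale using p0 mult_left_mono by (metis mult.left_commute)
  qed
  have Fb: "\<forall>y. \<bar>l * Fs s \<phi> y\<bar> \<le> p (s - tau s) * Hm"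
  proof
    fix y show "\<bar>l * Fs s \<phi> y\<bar> \<le> p (s - tau s) * Hm"
      using Fs_abs[OF ad, of s y] l by (simp add: abs_mult) (metis abs_ge_zero mult_left_le_one_le order_trans less_imp_le)
  qed
  have [measurable]: "Fs s \<phi> \<in> borel_measurable borel" by (rule Fs_meas1[OF ad])
  have R: "\<forall>y. l * Rs s \<phi> y \<le> Rs s (\<lambda>y. l * \<phi> y) y"
  proof
    fix y
    have "l * Rs s \<phi> y = (1 - deriv tau s) * kbar dI s (s - tau s) * gconv (tint DI (s - tau s) s) (\<lambda>y. l * Fs s \<phi> y) y"
      unfolding Rs_eq gconv_scale by simp
    also have "\<dots> \<le> (1 - deriv tau s) * kbar dI s (s - tau s) * gconv (tint DI (s - tau s) s) (Fs s (\<lambda>y. l * \<phi> y)) y"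
      using F Fb Fs_abs[OF adl] Fs_meas1[OF adl]
      by (intro cgconv_mono[where B="p (s - tau s) * Hm"] c_nonneg) auto
    finally show "l * Rs s \<phi> y \<le> Rs s (\<lambda>y. l * \<phi> y) y" unfolding Rs_eq .
  qed
  have Rb: "\<forall>y. \<bar>l * Rs s \<phi> y\<bar> \<le> (1 - deriv tau s) * (p (s - tau s) * Hm)"
  proof
    fix y show "\<bar>l * Rs s \<phi> y\<bar> \<le> (1 - deriv tau s) * (p (s - tau s) * Hm)"
      using Rs_abs[OF ad, of s y] l by (simp add: abs_mult) (metis abs_ge_zero mult_left_le_one_le order_trans less_imp_le)
  qed
  have [measurable]: "Rs s \<phi> \<in> borel_measurable borel" by (rule Rs_meas1[OF ad])
  have "l * Ws s \<phi> x = kbar dM T s * gconv (tint DM s T) (\<lambda>y. l * Rs s \<phi> y) x"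
    unfolding Ws_eq gconv_scale by simp
  also have "\<dots> \<le> kbar dM T s * gconv (tint DM s T) (Rs s (\<lambda>y. l * \<phi> y)) x"
    using R Rb Rs_abs[OF adl] Rs_meas1[OF adl]
    by (intro cgconv_mono[where B="(1 - deriv tau s) * (p (s - tau s) * Hm)"]) (auto intro: less_imp_le kbar_pos)
  finally show ?thesis unfolding Ws_eq .
qed

lemma Q_scale:
  assumes ad: "adm \<phi>" and l: "l \<in> {0<..<1}"
  shows "l * Qop T DM dM DI dI tau p h ta tb \<phi> x \<le> Qop T DM dM DI dI tau p h ta tb (\<lambda>y. l * \<phi> y) x"
proof -
  have adl: "adm (\<lambda>y. l * \<phi> y)" by (rule adm_scale[OF ad l])
  have e1: "kconv DM dM T 0 (\<lambda>y. l * \<phi> y) x = l * kconv DM dM T 0 \<phi> x"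
    unfolding kconv_eq[OF DM0] gconv_scale by simp
  have "l * integral {ta..tb} (\<lambda>s. Ws s \<phi> x) = integral {ta..tb} (\<lambda>s. l * Ws s \<phi> x)"
    using Ws_int[OF ad] by (rule integral_mult)
  also have "\<dots> \<le> integral {ta..tb} (\<lambda>s. Ws s (\<lambda>y. l * \<phi> y) x)"
    using Ws_int[OF ad] Ws_int[OF adl] Ws_scale[OF ad l]
    using l by (intro integral_le) auto
  finally show ?thesis unfolding Q_eq e1 by (simp add: distrib_left)
qed

lemma adm_translate: "adm \<phi> \<Longrightarrow> adm (translate c \<phi>)"
  unfolding adm_def translate_def by auto

lemma A_translate: "adm \<phi> \<Longrightarrow> Aop s (translate c \<phi>) y = Aop s \<phi> (y - c)"
  unfolding Aop_eq translate_def adm_def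
  by (subst gconv_translate[where B=ustar]) auto

lemma Fs_translate: "adm \<phi> \<Longrightarrow> Fs s (translate c \<phi>) = (\<lambda>y. Fs s \<phi> (y - c))"
  unfolding Fs_def by (simp add: A_translate)

lemma Rs_translate: "adm \<phi> \<Longrightarrow> Rs s (translate c \<phi>) y = Rs s \<phi> (y - c)"
  unfolding Rs_eq Fs_translate
  by (subst gconv_translate[where B="p (s - tau s) * Hm"]) (auto intro: Fs_meas1 Fs_abs)

lemma Ws_translate: "adm \<phi> \<Longrightarrow> Ws s (translate c \<phi>) x = Ws s \<phi> (x - c)"
proof -
  assume ad: "adm \<phi>"
  have e: "Rs s (translate c \<phi>) = (\<lambda>y. Rs s \<phi> (y - c))" using Rs_translate[OF ad] by auto
  show ?thesis unfolding Ws_eq e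
    by (subst gconv_translate[where B="(1 - deriv tau s) * (p (s - tau s) * Hm)"]) (use ad in \<open>auto intro: Rs_meas1 Rs_abs\<close>)
qed

lemma Q_translate:
  assumes ad: "adm \<phi>"
  shows "Qop T DM dM DI dI tau p h ta tb (translate c \<phi>) = translate c (Qop T DM dM DI dI tau p h ta tb \<phi>)"
proof
  fix x
  have "kconv DM dM T 0 (translate c \<phi>) x = kconv DM dM T 0 \<phi> (x - c)"
    unfolding kconv_eq[OF DM0] translate_def using ad unfolding adm_def
    by (subst gconv_translate[where B=ustar]) auto
  moreover have "integral {ta..tb} (\<lambda>s. Ws s (translate c \<phi>) x) = integral {ta..tb} (\<lambda>s. Ws s \<phi> (x - c))"
    using Ws_translate[OF ad] by simp
  ultimately show "Qop T DM dM DI dI tau p h ta tb (translate c \<phi>) x = translate c (Qop T DM dM DI dI tau p h ta tb \<phi>) x"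
    unfolding Q_eq translate_def[of c "Qop T DM dM DI dI tau p h ta tb \<phi>"] by simp
qed

lemma Rop_const: "Rop DI dI tau p h s (\<lambda>_. c) y = Rop DI dI tau p h s (\<lambda>_. c) 0"
  unfolding Rop_def kconv_eq[OF DI0] by (simp add: gconv_const)

lemma Q_const: "Qop T DM dM DI dI tau p h ta tb (\<lambda>_. \<gamma>) x = Qbar T dM DI dI tau p h ta tb \<gamma>"
proof -
  have A: "Aop s (\<lambda>_. \<gamma>) = (\<lambda>_. \<gamma> * kbar dM (s - tau s) 0)" for s
    unfolding Aop_eq by (simp add: gconv_const mult.commute)
  have R: "Rs s (\<lambda>_. \<gamma>) = (\<lambda>_. Rop DI dI tau p h s (\<lambda>_. \<gamma> * kbar dM (s - tau s) 0) 0)" for s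
    unfolding Rs_def A using Rop_const by auto
  have W: "Ws s (\<lambda>_. \<gamma>) x = kbar dM T s * Rop DI dI tau p h s (\<lambda>_. \<gamma> * kbar dM (s - tau s) 0) 0" for s
    unfolding Ws_eq R by (simp add: gconv_const)
  show ?thesis unfolding Q_eq W Qbar_def kconv_eq[OF DM0] by (simp add: gconv_const mult.commute)
qed

definition Kt :: real where "Kt = max Kb \<bar>T\<bar>"
definition V :: real where "V = tint DM (- Kt) Kt + tint DI (- Kt) Kt"

lemma V0: "V \<ge> 0" unfolding V_def by simp

lemma V_bounds:
  assumes s: "s \<in> {ta..tb}"
  shows "tint DM 0 (s - tau s) \<le> V" "tint DI (s - tau s) s \<le> V" "tint DM s T \<le> V" "tint DM 0 T \<le> V"
proof -
  have k: "\<bar>s - tau s\<bar> \<le> Kt" "\<bar>s\<bar> \<le> Kt" "\<bar>T\<bar> \<le> Kt" "0 \<le> Kt"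
    using Kb[OF s] unfolding Kt_def by auto
  have "tint DM 0 (s - tau s) \<le> tint DM (- Kt) Kt" using k by (intro tint_mono cDM DM0) auto
  thus "tint DM 0 (s - tau s) \<le> V" unfolding V_def by (simp add: add_increasing2)
  have "tint DI (s - tau s) s \<le> tint DI (- Kt) Kt" using k by (intro tint_mono cDI DI0) auto
  thus "tint DI (s - tau s) s \<le> V" unfolding V_def by (simp add: add_increasing)
  have "tint DM s T \<le> tint DM (- Kt) Kt" using k by (intro tint_mono cDM DM0) auto
  thus "tint DM s T \<le> V" unfolding V_def by (simp add: add_increasing2)
  have "tint DM 0 T \<le> tint DM (- Kt) Kt" using k by (intro tint_mono cDM DM0) auto
  thus "tint DM 0 T \<le> V" unfolding V_def by (simp add: add_increasing2)
qed

lemma kg_local: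
  assumes "a \<ge> 0" "a \<le> V" "0 \<le> c" "c \<le> C" "f \<in> borel_measurable borel" "g \<in> borel_measurable borel"
    "\<forall>y. \<bar>f y\<bar> \<le> B1" "\<forall>y. \<bar>g y\<bar> \<le> B1" "\<forall>y. \<bar>f y - g y\<bar> \<le> B" "R > 0"
    "\<forall>y. \<bar>y\<bar> \<le> N + R \<longrightarrow> \<bar>f y - g y\<bar> \<le> \<eta>" "\<bar>x\<bar> \<le> N"
  shows "\<bar>c * gconv a f x - c * gconv a g x\<bar> \<le> C * (\<eta> + 2 * V * B / R\<^sup>2)"
proof -
  have l: "\<bar>gconv a f x - gconv a g x\<bar> \<le> \<eta> + 2 * a * B / R\<^sup>2"
    by (rule gconv_local[OF assms(1,5,6,7,8,9,10,11,12)])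
  have B0: "B \<ge> 0" using assms(9) by (metis abs_ge_zero order_trans)
  have "2 * a * B / R\<^sup>2 \<le> 2 * V * B / R\<^sup>2"
    using assms(2) B0 by (intro divide_right_mono mult_right_mono) auto
  hence l2: "\<bar>gconv a f x - gconv a g x\<bar> \<le> \<eta> + 2 * V * B / R\<^sup>2" using l by linarith
  have "\<bar>c * gconv a f x - c * gconv a g x\<bar> = c * \<bar>gconv a f x - gconv a g x\<bar>"
    using assms(3) by (simp add: abs_mult right_diff_distrib[symmetric])
  also have "\<dots> \<le> C * (\<eta> + 2 * V * B / R\<^sup>2)"
    using l2 assms(3,4) by (intro mult_mono) (auto intro: order_trans[OF abs_ge_zero])
  finally show ?thesis .
qed

lemma adm_diff:
  assumes "adm \<phi>" "adm \<psi>" shows "\<bar>\<phi> y - \<psi> y\<bar> \<le> ustar"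
proof -
  have "0 \<le> \<phi> y" "\<phi> y \<le> ustar" "0 \<le> \<psi> y" "\<psi> y \<le> ustar" using assms unfolding adm_def by auto
  thus ?thesis by (simp add: abs_le_iff)
qed

lemma abs_adm: "adm \<phi> \<Longrightarrow> \<bar>\<phi> y\<bar> \<le> ustar"
  unfolding adm_def by auto

lemma layer_A:
  assumes a1: "adm \<phi>" and a2: "adm \<psi>" and s: "s \<in> {ta..tb}" and R: "R > 0"
    and cl: "\<forall>y. \<bar>y\<bar> \<le> N + R \<longrightarrow> \<bar>\<phi> y - \<psi> y\<bar> \<le> \<eta>" and y: "\<bar>y\<bar> \<le> N"
  shows "\<bar>Aop s \<phi> y - Aop s \<psi> y\<bar> \<le> 1 * (\<eta> + 2 * V * ustar / R\<^sup>2)"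
  unfolding Aop_eq
  by (rule kg_local[OF tDM0 V_bounds(1)[OF s] less_imp_le[OF kbar_pos] kbar_le1[OF dM0]
        adm_meas[OF a1] adm_meas[OF a2] allI[OF abs_adm[OF a1]] allI[OF abs_adm[OF a2]]
        allI[OF adm_diff[OF a1 a2]] R cl y])

lemma layer_U:
  assumes a1: "adm \<phi>" and a2: "adm \<psi>" and R: "R > 0"
    and cl: "\<forall>y. \<bar>y\<bar> \<le> N + R \<longrightarrow> \<bar>\<phi> y - \<psi> y\<bar> \<le> \<eta>" and y: "\<bar>y\<bar> \<le> N"
  shows "\<bar>kconv DM dM T 0 \<phi> y - kconv DM dM T 0 \<psi> y\<bar> \<le> 1 * (\<eta> + 2 * V * ustar / R\<^sup>2)"
  unfolding kconv_eq[OF DM0]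
  by (rule kg_local[OF tDM0 V_bounds(4)[of ta] less_imp_le[OF kbar_pos] kbar_le1[OF dM0]
        adm_meas[OF a1] adm_meas[OF a2] allI[OF abs_adm[OF a1]] allI[OF abs_adm[OF a2]]
        allI[OF adm_diff[OF a1 a2]] R cl y]) (use tab in auto)

lemma layer_F:
  assumes a1: "adm \<phi>" and a2: "adm \<psi>" and s: "s \<in> {ta..tb}"
    and uc: "\<forall>a\<in>{0..ustar}. \<forall>b\<in>{0..ustar}. \<bar>a - b\<bar> < dh \<longrightarrow> \<bar>h a - h b\<bar> \<le> eh"
    and d: "\<bar>Aop s \<phi> y - Aop s \<psi> y\<bar> < dh"
  shows "\<bar>Fs s \<phi> y - Fs s \<psi> y\<bar> \<le> Kb * eh"
proof -
  have hl: "\<bar>h (Aop s \<phi> y) - h (Aop s \<psi> y)\<bar> \<le> eh"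
    using uc d A_range[OF a1, of s y] A_range[OF a2, of s y] by auto
  have e: "\<bar>Fs s \<phi> y - Fs s \<psi> y\<bar> = p (s - tau s) * \<bar>h (Aop s \<phi> y) - h (Aop s \<psi> y)\<bar>"
    unfolding Fs_def using p0 by (simp add: abs_mult right_diff_distrib[symmetric])
  have pK: "p (s - tau s) \<le> Kb" using Kb[OF s] by auto
  show ?thesis unfolding e by (rule mult_mono[OF pK hl Kb0 abs_ge_zero])
qed

lemma Fs_glob: "adm \<phi> \<Longrightarrow> adm \<psi> \<Longrightarrow> s \<in> {ta..tb} \<Longrightarrow> \<bar>Fs s \<phi> y - Fs s \<psi> y\<bar> \<le> Kb * Hm"
proof -
  assume a1: "adm \<phi>" and a2: "adm \<psi>" and s: "s \<in> {ta..tb}"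
  have "p (s - tau s) * Hm \<le> Kb * Hm" using Kb[OF s] Hm0 by (intro mult_right_mono) auto
  thus ?thesis using Fs_range[OF a1, of s y] Fs_range[OF a2, of s y] by (simp add: abs_diff_le_iff)
qed

lemma layer_R:
  assumes a1: "adm \<phi>" and a2: "adm \<psi>" and s: "s \<in> {ta..tb}" and R: "R > 0"
    and cl: "\<forall>y. \<bar>y\<bar> \<le> N + R \<longrightarrow> \<bar>Fs s \<phi> y - Fs s \<psi> y\<bar> \<le> \<eta>" and y: "\<bar>y\<bar> \<le> N"
  shows "\<bar>Rs s \<phi> y - Rs s \<psi> y\<bar> \<le> Kb * (\<eta> + 2 * V * (Kb * Hm) / R\<^sup>2)"
proof -
  have c: "(1 - deriv tau s) * kbar dI s (s - tau s) \<le> Kb"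
  proof -
    have "(1 - deriv tau s) * kbar dI s (s - tau s) \<le> (1 - deriv tau s) * 1"
      using kbar_le1[OF dI0] dtau1 by (intro mult_left_mono) (auto simp: less_imp_le)
    thus ?thesis using Kb[OF s] by auto
  qed
  show ?thesis unfolding Rs_eq
    by (rule kg_local[OF tDI0 V_bounds(2)[OF s] c_nonneg c
        Fs_meas1[OF a1] Fs_meas1[OF a2] allI[OF Fs_abs[OF a1]] allI[OF Fs_abs[OF a2]]
        allI[OF Fs_glob[OF a1 a2 s]] R cl y])
qed

lemma Rs_glob: "adm \<phi> \<Longrightarrow> adm \<psi> \<Longrightarrow> s \<in> {ta..tb} \<Longrightarrow> \<bar>Rs s \<phi> y - Rs s \<psi> y\<bar> \<le> Cw"
proof -
  assume a1: "adm \<phi>" and a2: "adm \<psi>" and s: "s \<in> {ta..tb}"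
  have "(1 - deriv tau s) * (p (s - tau s) * Hm) \<le> Kb * (Kb * Hm)"
    using Kb[OF s] Hm0 p0 dtau1 by (intro mult_mono) (auto simp: less_imp_le)
  thus ?thesis using Rs_range[OF a1, of s y] Rs_range[OF a2, of s y] unfolding Cw_def by (simp add: abs_diff_le_iff)
qed

lemma layer_W:
  assumes a1: "adm \<phi>" and a2: "adm \<psi>" and s: "s \<in> {ta..tb}" and R: "R > 0"
    and cl: "\<forall>y. \<bar>y\<bar> \<le> N + R \<longrightarrow> \<bar>Rs s \<phi> y - Rs s \<psi> y\<bar> \<le> \<eta>" and y: "\<bar>y\<bar> \<le> N"
  shows "\<bar>Ws s \<phi> y - Ws s \<psi> y\<bar> \<le> 1 * (\<eta> + 2 * V * Cw / R\<^sup>2)"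
proof -
  have cw: "(1 - deriv tau s) * (p (s - tau s) * Hm) \<le> Cw"
    unfolding Cw_def using Kb[OF s] Hm0 p0 dtau1 by (intro mult_mono) (auto simp: less_imp_le)
  have b: "\<forall>y. \<bar>Rs s \<phi> y\<bar> \<le> Cw" "\<forall>y. \<bar>Rs s \<psi> y\<bar> \<le> Cw"
    using Rs_abs[OF a1, of s] Rs_abs[OF a2, of s] cw by (auto intro: order_trans)
  show ?thesis unfolding Ws_eq
    by (rule kg_local[OF tDM0 V_bounds(3)[OF s] less_imp_le[OF kbar_pos] kbar_le1[OF dM0]
        Rs_meas1[OF a1] Rs_meas1[OF a2] b
        allI[OF Rs_glob[OF a1 a2 s]] R cl y])
qed

lemma h_unif: "e > 0 \<Longrightarrow> \<exists>d>0. \<forall>a\<in>{0..ustar}. \<forall>b\<in>{0..ustar}. \<bar>a - b\<bar> < d \<longrightarrow> \<bar>h a - h b\<bar> \<le> e"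
proof -
  assume e: "e > 0"
  have "uniformly_continuous_on {0..ustar} h"
    by (rule compact_uniformly_continuous) (rule continuous_on_subset[OF ch], auto)
  then obtain d where d: "d > 0" "\<forall>x\<in>{0..ustar}. \<forall>x'\<in>{0..ustar}. dist x' x < d \<longrightarrow> dist (h x') (h x) < e"
    using e unfolding uniformly_continuous_on_def by metis
  show ?thesis using d by (intro exI[of _ d]) (auto simp: dist_real_def less_imp_le)
qed

lemma Q_local:
  assumes eps: "\<epsilon> > 0" and M: "M \<ge> 0"
  shows "\<exists>N \<delta>. \<delta> > 0 \<and> (\<forall>\<phi> \<psi>. adm \<phi> \<longrightarrow> adm \<psi> \<longrightarrow> (\<forall>y. \<bar>y\<bar> \<le> N \<longrightarrow> \<bar>\<phi> y - \<psi> y\<bar> \<le> \<delta>) \<longrightarrow>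
     (\<forall>x. \<bar>x\<bar> \<le> M \<longrightarrow> \<bar>Qop T DM dM DI dI tau p h ta tb \<phi> x - Qop T DM dM DI dI tau p h ta tb \<psi> x\<bar> \<le> \<epsilon>))"
proof -
  define L where "L = tb - ta"
  have L0: "L \<ge> 0" using tab L_def by simp
  define eh where "eh = \<epsilon> / (4 * (1 + L * Kb * Kb))"
  have den: "1 + L * Kb * Kb > 0" using L0 Kb0 by (simp add: add_pos_nonneg)
  have eh0: "eh > 0" unfolding eh_def using eps den by simp
  have Leh: "L * Kb * Kb * eh \<le> \<epsilon> / 4"
  proof -
    have "L * Kb * Kb * eh = (L * Kb * Kb) / (1 + L * Kb * Kb) * (\<epsilon> / 4)"
      unfolding eh_def using den by (simp add: field_simps)
    also have "\<dots> \<le> 1 * (\<epsilon> / 4)"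
      using den L0 Kb0 eps by (intro mult_right_mono) auto
    finally show ?thesis by simp
  qed
  obtain dh where dh: "dh > 0" "\<forall>a\<in>{0..ustar}. \<forall>b\<in>{0..ustar}. \<bar>a - b\<bar> < dh \<longrightarrow> \<bar>h a - h b\<bar> \<le> eh"
    using h_unif[OF eh0] by blast
  define m where "m = min (\<epsilon> / 4) (dh / 2)"
  have m0: "m > 0" unfolding m_def using eps dh by simp
  define Z where "Z = 2 * V * ustar + L * (Kb * (2 * V * (Kb * Hm)) + 2 * V * Cw) + 1"
  have nnZ: "0 \<le> L * (Kb * (2 * V * (Kb * Hm)) + 2 * V * Cw)"
    using V0 L0 Kb0 Hm0 Cw0 by (intro mult_nonneg_nonneg add_nonneg_nonneg) auto
  have nnZ2: "0 \<le> 2 * V * ustar" using V0 us by simp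
  have Z1: "Z \<ge> 1" unfolding Z_def using nnZ nnZ2 by linarith
  define R where "R = max 1 (Z / m)"
  have R1: "R \<ge> 1" unfolding R_def by simp
  hence R0: "R > 0" by simp
  have RR: "R \<le> R\<^sup>2" using R1 by (simp add: power2_eq_square)
  have ZR: "Z / R\<^sup>2 \<le> m"
  proof -
    have "Z / m \<le> R\<^sup>2" using RR unfolding R_def by linarith
    hence "Z \<le> m * R\<^sup>2" using m0 by (simp add: field_simps)
    thus ?thesis using R0 by (simp add: field_simps)
  qed
  have cR: "c / R\<^sup>2 \<le> m" if "0 \<le> c" "c \<le> Z" for c
  proof -
    have "c / R\<^sup>2 \<le> Z / R\<^sup>2" using that R0 by (simp add: divide_right_mono)
    thus ?thesis using ZR by linarith
  qed
  define \<delta> where "\<delta> = m / 2"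
  have d0: "\<delta> > 0" unfolding \<delta>_def using m0 by simp
  show ?thesis
  proof (rule exI[of _ "M + 3 * R"], rule exI[of _ \<delta>], intro conjI[OF d0] allI impI)
    fix \<phi> \<psi> x
    assume a1: "adm \<phi>" and a2: "adm \<psi>" and cl: "\<forall>y. \<bar>y\<bar> \<le> M + 3 * R \<longrightarrow> \<bar>\<phi> y - \<psi> y\<bar> \<le> \<delta>"
      and x: "\<bar>x\<bar> \<le> M"
    have nn: "0 \<le> L * (Kb * (2 * V * (Kb * Hm)) + 2 * V * Cw)"
      using V0 L0 Kb0 Hm0 Cw0 by (intro mult_nonneg_nonneg add_nonneg_nonneg) auto
    have nn2: "0 \<le> 2 * V * ustar" using V0 us by simp
    have t1: "2 * V * ustar / R\<^sup>2 \<le> m" by (rule cR[OF nn2]) (use nn in \<open>simp add: Z_def\<close>)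
    define Ew where "Ew = Kb * (Kb * eh + 2 * V * (Kb * Hm) / R\<^sup>2) + 2 * V * Cw / R\<^sup>2"
    have W: "\<bar>Ws s \<phi> x - Ws s \<psi> x\<bar> \<le> Ew" if s: "s \<in> {ta..tb}" for s
    proof -
      have clA: "\<forall>y. \<bar>y\<bar> \<le> (M + 2 * R) + R \<longrightarrow> \<bar>\<phi> y - \<psi> y\<bar> \<le> \<delta>" using cl by simp
      have A: "\<bar>Aop s \<phi> y - Aop s \<psi> y\<bar> < dh" if y: "\<bar>y\<bar> \<le> M + 2 * R" for y
      proof -
        have "\<bar>Aop s \<phi> y - Aop s \<psi> y\<bar> \<le> 1 * (\<delta> + 2 * V * ustar / R\<^sup>2)"
          by (rule layer_A[OF a1 a2 s R0 clA y])
        moreover have "\<delta> + 2 * V * ustar / R\<^sup>2 < dh"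
        proof -
          have "m \<le> dh / 2" unfolding m_def by simp
          thus ?thesis using t1 m0 unfolding \<delta>_def by linarith
        qed
        ultimately show ?thesis by simp
      qed
      have F: "\<forall>y. \<bar>y\<bar> \<le> (M + R) + R \<longrightarrow> \<bar>Fs s \<phi> y - Fs s \<psi> y\<bar> \<le> Kb * eh"
      proof (intro allI impI)
        fix y assume "\<bar>y\<bar> \<le> (M + R) + R"
        hence "\<bar>y\<bar> \<le> M + 2 * R" by simp
        thus "\<bar>Fs s \<phi> y - Fs s \<psi> y\<bar> \<le> Kb * eh" by (rule layer_F[OF a1 a2 s dh(2) A])
      qed
      have Rl: "\<forall>y. \<bar>y\<bar> \<le> M + R \<longrightarrow> \<bar>Rs s \<phi> y - Rs s \<psi> y\<bar> \<le> Kb * (Kb * eh + 2 * V * (Kb * Hm) / R\<^sup>2)"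
        using layer_R[OF a1 a2 s R0 F] by blast
      show ?thesis using layer_W[OF a1 a2 s R0 Rl x] unfolding Ew_def by simp
    qed
    have "\<bar>Ws ta \<phi> x - Ws ta \<psi> x\<bar> \<le> Ew" using W tab by simp
    hence Ew0: "Ew \<ge> 0" using abs_ge_zero[of "Ws ta \<phi> x - Ws ta \<psi> x"] by linarith
    have int: "((\<lambda>s. Ws s \<phi> x - Ws s \<psi> x) has_integral (integral {ta..tb} (\<lambda>s. Ws s \<phi> x) - integral {ta..tb} (\<lambda>s. Ws s \<psi> x))) {ta..tb}"
      using Ws_int[OF a1] Ws_int[OF a2] by (intro has_integral_diff) (auto simp: integrable_integral)
    have I: "\<bar>integral {ta..tb} (\<lambda>s. Ws s \<phi> x) - integral {ta..tb} (\<lambda>s. Ws s \<psi> x)\<bar> \<le> Ew * L"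
      using has_integral_bound_real[OF Ew0 _ int, of "{}"] W tab unfolding L_def by auto
    have U: "\<bar>kconv DM dM T 0 \<phi> x - kconv DM dM T 0 \<psi> x\<bar> \<le> 1 * (\<delta> + 2 * V * ustar / R\<^sup>2)"
      by (rule layer_U[OF a1 a2 R0 _ x]) (use cl R0 in auto)
    have sum: "2 * V * ustar / R\<^sup>2 + L * (Kb * (2 * V * (Kb * Hm) / R\<^sup>2) + 2 * V * Cw / R\<^sup>2) = (Z - 1) / R\<^sup>2"
      unfolding Z_def using R0 by (simp add: field_simps)
    have "(Z - 1) / R\<^sup>2 \<le> m" by (rule cR) (use Z1 in auto)
    have "\<bar>Qop T DM dM DI dI tau p h ta tb \<phi> x - Qop T DM dM DI dI tau p h ta tb \<psi> x\<bar>
        \<le> \<bar>kconv DM dM T 0 \<phi> x - kconv DM dM T 0 \<psi> x\<bar> + \<bar>integral {ta..tb} (\<lambda>s. Ws s \<phi> x) - integral {ta..tb} (\<lambda>s. Ws s \<psi> x)\<bar>"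
      unfolding Q_eq by linarith
    also have "\<dots> \<le> (\<delta> + 2 * V * ustar / R\<^sup>2) + Ew * L" using U I by simp
    also have "\<dots> = \<delta> + L * Kb * Kb * eh + (2 * V * ustar / R\<^sup>2 + L * (Kb * (2 * V * (Kb * Hm) / R\<^sup>2) + 2 * V * Cw / R\<^sup>2))"
      unfolding Ew_def by (simp add: algebra_simps)
    also have "\<dots> \<le> \<epsilon>"
    proof -
      have mle: "m \<le> \<epsilon> / 4" unfolding m_def by simp
      show ?thesis using sum \<open>(Z - 1) / R\<^sup>2 \<le> m\<close> Leh mle m0 unfolding \<delta>_def by linarith
    qed
    finally show "\<bar>Qop T DM dM DI dI tau p h ta tb \<phi> x - Qop T DM dM DI dI tau p h ta tb \<psi> x\<bar> \<le> \<epsilon>" .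
  qed
qed

end


lemma sup_le_eta:
  fixes u :: "real \<Rightarrow> real"
  assumes "\<forall>x. \<bar>x\<bar> \<le> real (Suc n) \<longrightarrow> \<bar>u x\<bar> \<le> \<eta>"
  shows "(SUP x \<in> {- real (Suc n) .. real (Suc n)}. \<bar>u x\<bar>) \<le> \<eta>"
  by (rule cSUP_least) (use assms in auto)

lemma sup_ge:
  fixes u :: "real \<Rightarrow> real"
  assumes "\<forall>x. \<bar>u x\<bar> \<le> B" "\<bar>x\<bar> \<le> real (Suc n)"
  shows "\<bar>u x\<bar> \<le> (SUP x \<in> {- real (Suc n) .. real (Suc n)}. \<bar>u x\<bar>)"
proof (rule cSUP_upper)
  show "x \<in> {- real (Suc n)..real (Suc n)}" using assms(2) by auto
  show "bdd_above ((\<lambda>x. \<bar>u x\<bar>) ` {- real (Suc n)..real (Suc n)})"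
    using assms(1) by (intro bdd_aboveI[of _ B]) auto
qed

lemma sup_nonneg:
  fixes u :: "real \<Rightarrow> real"
  assumes "\<forall>x. \<bar>u x\<bar> \<le> B"
  shows "0 \<le> (SUP x \<in> {- real (Suc n) .. real (Suc n)}. \<bar>u x\<bar>)"
  using sup_ge[OF assms, of 0 n] by simp

lemma conorm_summable:
  fixes u :: "real \<Rightarrow> real"
  assumes "\<forall>x. \<bar>u x\<bar> \<le> B"
  shows "summable (\<lambda>n. (1/2::real) ^ Suc n * (SUP x \<in> {- real (Suc n) .. real (Suc n)}. \<bar>u x\<bar>))"
proof (rule summable_comparison_test'[where g="\<lambda>n. B * (1/2) ^ Suc n"])
  show "summable (\<lambda>n. B * (1/2::real) ^ Suc n)"
    by (intro summable_mult) (simp add: summable_geometric)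
  fix n
  have "(SUP x \<in> {- real (Suc n) .. real (Suc n)}. \<bar>u x\<bar>) \<le> B" by (rule sup_le_eta) (use assms in auto)
  thus "norm ((1/2::real) ^ Suc n * (SUP x \<in> {- real (Suc n) .. real (Suc n)}. \<bar>u x\<bar>)) \<le> B * (1/2) ^ Suc n"
    using sup_nonneg[OF assms, of n] by (simp add: abs_mult mult.commute)
qed

lemma conorm_local:
  assumes B: "\<forall>x. \<bar>u x\<bar> \<le> B" and x: "\<bar>x\<bar> \<le> real (Suc n)"
  shows "\<bar>u x\<bar> \<le> 2 ^ Suc n * conorm u"
proof -
  let ?f = "\<lambda>n. (1/2::real) ^ Suc n * (SUP x \<in> {- real (Suc n) .. real (Suc n)}. \<bar>u x\<bar>)"
  have "?f n \<le> conorm u"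
    unfolding conorm_def using sum_le_suminf[OF conorm_summable[OF B], of "{n}"] sup_nonneg[OF B] by simp
  hence "(SUP x \<in> {- real (Suc n) .. real (Suc n)}. \<bar>u x\<bar>) \<le> 2 ^ Suc n * conorm u"
    by (simp add: field_simps power_divide)
  thus ?thesis using sup_ge[OF B x] by linarith
qed

lemma conorm_bound:
  assumes B: "\<forall>x. \<bar>u x\<bar> \<le> B" and loc: "\<forall>x. \<bar>x\<bar> \<le> real K \<longrightarrow> \<bar>u x\<bar> \<le> \<eta>"
  shows "conorm u \<le> \<eta> + 2 * B * (2/3) ^ K"
proof -
  have B0: "B \<ge> 0" using B by (metis abs_ge_zero order_trans)
  have e0: "\<eta> \<ge> 0" using loc[rule_format, of 0] by (metis abs_ge_zero abs_zero of_nat_0_le_iff order_trans)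
  let ?f = "\<lambda>n. (1/2::real) ^ Suc n * (SUP x \<in> {- real (Suc n) .. real (Suc n)}. \<bar>u x\<bar>)"
  let ?g = "\<lambda>n. \<eta> * (1/2) * (1/2::real) ^ n + B / 2 * (2/3) ^ K * (3/4::real) ^ n"
  have le: "?f n \<le> ?g n" for n
  proof (cases "Suc n \<le> K")
    case True
    have "(SUP x \<in> {- real (Suc n) .. real (Suc n)}. \<bar>u x\<bar>) \<le> \<eta>"
      by (rule sup_le_eta) (use loc True in auto)
    hence "?f n \<le> (1/2) ^ Suc n * \<eta>" by (intro mult_left_mono) auto
    moreover have "0 \<le> B / 2 * (2/3) ^ K * (3/4::real) ^ n" using B0 by simp
    ultimately show ?thesis by (simp add: mult_ac add_increasing2)
  next
    case False
    have s: "(SUP x \<in> {- real (Suc n) .. real (Suc n)}. \<bar>u x\<bar>) \<le> B"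
      by (rule sup_le_eta) (use B in auto)
    have "(2/3::real) ^ n \<le> (2/3) ^ K" using False by (intro power_decreasing) auto
    hence "(2/3::real) ^ n * (3/4) ^ n \<le> (2/3) ^ K * (3/4) ^ n"
      by (intro mult_right_mono) auto
    moreover have "(2/3::real) ^ n * (3/4) ^ n = (1/2) ^ n"
      by (simp add: power_mult_distrib[symmetric])
    ultimately have "(1/2::real) ^ n \<le> (2/3) ^ K * (3/4) ^ n" by simp
    hence "(1/2::real) * (1/2) ^ n * B \<le> (1/2) * ((2/3) ^ K * (3/4) ^ n) * B"
      using B0 by (intro mult_right_mono) auto
    hence b: "(1/2::real) ^ Suc n * B \<le> B / 2 * (2/3) ^ K * (3/4::real) ^ n" by (simp add: mult_ac)
    have a: "?f n \<le> (1/2) ^ Suc n * B" using s by (intro mult_left_mono) auto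
    have c: "0 \<le> \<eta> * (1/2) * (1/2::real) ^ n" using e0 by simp
    show ?thesis using a b c by linarith
  qed
  have sg: "summable ?g" by (intro summable_add summable_mult) (simp_all add: summable_geometric)
  have "conorm u \<le> suminf ?g" unfolding conorm_def by (rule suminf_le[OF le conorm_summable[OF B] sg])
  also have "suminf ?g = \<eta> * (1/2) * 2 + B / 2 * (2/3) ^ K * 4"
  proof -
    have g1: "(\<lambda>n. (1/2::real) ^ n) sums 2" using geometric_sums[of "1/2::real"] by simp
    have g2: "(\<lambda>n. (3/4::real) ^ n) sums 4" using geometric_sums[of "3/4::real"] by simp
    have "?g sums (\<eta> * (1/2) * 2 + B / 2 * (2/3) ^ K * 4)"
      by (intro sums_add sums_mult g1 g2)
    thus ?thesis by (rule sums_unique[symmetric])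
  qed
  finally show ?thesis by simp
qed

locale QL2 = QL +
  assumes h00: "h 0 = 0" and QBu: "Qbar T dM DI dI tau p h ta tb ustar = ustar"
begin

abbreviation QQ where "QQ \<equiv> Qop T DM dM DI dI tau p h ta tb"
abbreviation QB where "QB \<equiv> Qbar T dM DI dI tau p h ta tb"

lemma Cr_adm: "\<phi> \<in> Cr ustar \<Longrightarrow> adm \<phi>"
  unfolding Cr_def adm_def by (auto intro: borel_measurable_continuous_onI)

lemma adm_const: "0 \<le> c \<Longrightarrow> c \<le> ustar \<Longrightarrow> adm (\<lambda>_. c)"
  unfolding adm_def by auto

lemma QB0: "QB 0 = 0"
  unfolding Qbar_def Rop_def kconv_eq[OF DI0] by (simp add: h00 gconv_const)

lemma Q_range: "adm \<phi> \<Longrightarrow> 0 \<le> QQ \<phi> x \<and> QQ \<phi> x \<le> ustar"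
proof -
  assume ad: "adm \<phi>"
  have "QQ (\<lambda>_. 0) x \<le> QQ \<phi> x"
    by (rule Q_mono[OF adm_const ad]) (use ad us in \<open>auto simp: adm_def\<close>)
  moreover have "QQ \<phi> x \<le> QQ (\<lambda>_. ustar) x"
    by (rule Q_mono[OF ad adm_const]) (use ad us in \<open>auto simp: adm_def\<close>)
  ultimately show ?thesis unfolding Q_const QB0 QBu by simp
qed

lemma Q_cont:
  assumes \<phi>: "\<phi> \<in> Cr ustar"
  shows "continuous_on UNIV (QQ \<phi>)"
  unfolding continuous_on_iff
proof (intro ballI allI impI)
  fix x0 :: real and e :: real
  assume e: "e > 0"
  have ad: "adm \<phi>" by (rule Cr_adm[OF \<phi>])
  obtain N \<delta> where d: "\<delta> > 0" and loc: "\<forall>\<phi> \<psi>. adm \<phi> \<longrightarrow> adm \<psi> \<longrightarrow> (\<forall>y. \<bar>y\<bar> \<le> N \<longrightarrow> \<bar>\<phi> y - \<psi> y\<bar> \<le> \<delta>) \<longrightarrow>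
     (\<forall>x. \<bar>x\<bar> \<le> \<bar>x0\<bar> \<longrightarrow> \<bar>QQ \<phi> x - QQ \<psi> x\<bar> \<le> e / 2)"
    using Q_local[of "e/2" "\<bar>x0\<bar>"] e by auto
  have "uniformly_continuous_on {- \<bar>N\<bar> - 1 .. \<bar>N\<bar> + 1} \<phi>"
    using \<phi> unfolding Cr_def
    by (intro compact_uniformly_continuous) (auto intro: continuous_on_subset)
  then obtain d0 where d0: "d0 > 0" "\<forall>x\<in>{- \<bar>N\<bar> - 1 .. \<bar>N\<bar> + 1}. \<forall>x'\<in>{- \<bar>N\<bar> - 1 .. \<bar>N\<bar> + 1}. dist x' x < d0 \<longrightarrow> dist (\<phi> x') (\<phi> x) < \<delta>"
    using d unfolding uniformly_continuous_on_def by metis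
  show "\<exists>d>0. \<forall>x'\<in>UNIV. dist x' x0 < d \<longrightarrow> dist (QQ \<phi> x') (QQ \<phi> x0) < e"
  proof (intro exI[of _ "min d0 1"] conjI ballI impI)
    show "min d0 1 > 0" using d0 by simp
    fix x' :: real assume "x' \<in> UNIV" and xd: "dist x' x0 < min d0 1"
    define c where "c = x0 - x'"
    have c1: "\<bar>c\<bar> < 1" "\<bar>c\<bar> < d0" using xd unfolding c_def dist_real_def by auto
    have close: "\<forall>y. \<bar>y\<bar> \<le> N \<longrightarrow> \<bar>translate c \<phi> y - \<phi> y\<bar> \<le> \<delta>"
    proof (intro allI impI)
      fix y assume y: "\<bar>y\<bar> \<le> N"
      have m1: "y \<in> {- \<bar>N\<bar> - 1 .. \<bar>N\<bar> + 1}" "y - c \<in> {- \<bar>N\<bar> - 1 .. \<bar>N\<bar> + 1}"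
        using y c1 by auto
      have "dist (y - c) y < d0" using c1 by (simp add: dist_real_def)
      have "dist (\<phi> (y - c)) (\<phi> y) < \<delta>"
        using d0(2) m1 \<open>dist (y - c) y < d0\<close> by blast
      hence "dist (\<phi> (y - c)) (\<phi> y) < \<delta>" .
      thus "\<bar>translate c \<phi> y - \<phi> y\<bar> \<le> \<delta>" by (simp add: translate_def dist_real_def)
    qed
    have "\<bar>QQ (translate c \<phi>) x0 - QQ \<phi> x0\<bar> \<le> e / 2"
      using loc adm_translate[OF ad, of c] ad close by blast
    moreover have "QQ (translate c \<phi>) x0 = translate c (QQ \<phi>) x0"
      using Q_translate[OF ad, of c] by simp
    moreover have "translate c (QQ \<phi>) x0 = QQ \<phi> x'" unfolding translate_def c_def by simp
    ultimately show "dist (QQ \<phi> x') (QQ \<phi> x0) < e" using e by (simp add: dist_real_def)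
  qed
qed

lemma Q_Cr: "\<phi> \<in> Cr ustar \<Longrightarrow> QQ \<phi> \<in> Cr ustar"
proof -
  assume a: "\<phi> \<in> Cr ustar"
  show ?thesis unfolding Cr_def mem_Collect_eq using Q_cont[OF a] Q_range[OF Cr_adm[OF a]] by blast
qed

lemma Q_conorm:
  assumes \<phi>: "\<phi> \<in> Cr ustar" and e: "\<epsilon> > 0"
  shows "\<exists>\<delta>>0. \<forall>\<psi>\<in>Cr ustar. conorm (\<lambda>x. \<psi> x - \<phi> x) < \<delta> \<longrightarrow> conorm (\<lambda>x. QQ \<psi> x - QQ \<phi> x) < \<epsilon>"
proof -
  have ad: "adm \<phi>" by (rule Cr_adm[OF \<phi>])
  obtain K where K: "(2/3::real) ^ K < \<epsilon> / (4 * ustar)"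
    using real_arch_pow_inv[of "\<epsilon> / (4 * ustar)" "2/3"] e us by auto
  obtain N \<delta> where d: "\<delta> > 0" and loc: "\<forall>\<phi> \<psi>. adm \<phi> \<longrightarrow> adm \<psi> \<longrightarrow> (\<forall>y. \<bar>y\<bar> \<le> N \<longrightarrow> \<bar>\<phi> y - \<psi> y\<bar> \<le> \<delta>) \<longrightarrow>
     (\<forall>x. \<bar>x\<bar> \<le> real K \<longrightarrow> \<bar>QQ \<phi> x - QQ \<psi> x\<bar> \<le> \<epsilon> / 4)"
    using Q_local[of "\<epsilon>/4" "real K"] e by auto
  define n0 where "n0 = nat \<lceil>N\<rceil>"
  have Nn: "N \<le> real (Suc n0)" unfolding n0_def by linarith
  show ?thesis
  proof (intro exI[of _ "\<delta> / 2 ^ Suc n0"] conjI ballI impI)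
    show "\<delta> / 2 ^ Suc n0 > 0" using d by simp
    fix \<psi> assume \<psi>: "\<psi> \<in> Cr ustar" and c: "conorm (\<lambda>x. \<psi> x - \<phi> x) < \<delta> / 2 ^ Suc n0"
    have ap: "adm \<psi>" by (rule Cr_adm[OF \<psi>])
    have B: "\<forall>x. \<bar>\<psi> x - \<phi> x\<bar> \<le> ustar" using adm_diff[OF ap ad] by blast
    have cl: "\<forall>y. \<bar>y\<bar> \<le> N \<longrightarrow> \<bar>\<psi> y - \<phi> y\<bar> \<le> \<delta>"
    proof (intro allI impI)
      fix y assume "\<bar>y\<bar> \<le> N"
      hence "\<bar>y\<bar> \<le> real (Suc n0)" using Nn by linarith
      hence "\<bar>\<psi> y - \<phi> y\<bar> \<le> 2 ^ Suc n0 * conorm (\<lambda>x. \<psi> x - \<phi> x)"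
        using conorm_local[OF B] by simp
      also have "\<dots> \<le> \<delta>" using c by (simp add: field_simps)
      finally show "\<bar>\<psi> y - \<phi> y\<bar> \<le> \<delta>" .
    qed
    have lq: "\<forall>x. \<bar>x\<bar> \<le> real K \<longrightarrow> \<bar>QQ \<psi> x - QQ \<phi> x\<bar> \<le> \<epsilon> / 4"
      using loc ap ad cl by blast
    have BQ: "\<forall>x. \<bar>QQ \<psi> x - QQ \<phi> x\<bar> \<le> ustar"
    proof
      fix x show "\<bar>QQ \<psi> x - QQ \<phi> x\<bar> \<le> ustar"
        using Q_range[OF ap, of x] Q_range[OF ad, of x] by (simp add: abs_le_iff)
    qed
    have "conorm (\<lambda>x. QQ \<psi> x - QQ \<phi> x) \<le> \<epsilon> / 4 + 2 * ustar * (2/3) ^ K"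
      by (rule conorm_bound[OF BQ lq])
    also have "2 * ustar * (2/3) ^ K < 2 * ustar * (\<epsilon> / (4 * ustar))"
      using K us by (intro mult_strict_left_mono) auto
    also have "2 * ustar * (\<epsilon> / (4 * ustar)) = \<epsilon> / 2" using us by simp
    finally show "conorm (\<lambda>x. QQ \<psi> x - QQ \<phi> x) < \<epsilon>" using e by simp
  qed
qed

end

locale QL3 = QL2 +
  fixes h0' :: real
  assumes mini: "\<forall>z>0. Qbar T dM DI dI tau p h ta tb z = z \<longrightarrow> ustar \<le> z"
    and hder: "(h has_real_derivative h0') (at 0 within {0..})"
    and Lgt: "Lnum T dM dI tau p h0' ta tb > 1"
    and sb: "\<forall>s\<in>{ta..tb}. 0 \<le> s - tau s \<and> s - tau s \<le> s \<and> s \<le> T"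
begin

definition Wc :: "real \<Rightarrow> real" where
  "Wc s = kbar dM T s * ((1 - deriv tau s) * (kbar dI s (s - tau s) * p (s - tau s)))"
definition bb :: "real \<Rightarrow> real" where "bb s = kbar dM (s - tau s) 0"

lemma Wc_meas[measurable]: "Wc \<in> borel_measurable borel"
  unfolding Wc_def by measurable
lemma bb_meas[measurable]: "bb \<in> borel_measurable borel"
  unfolding bb_def by measurable

lemma Wc_nonneg: "Wc s \<ge> 0"
  unfolding Wc_def using kbar_pos[of dM T s] kbar_pos[of dI s "s - tau s"] dtau1 p0
  by (intro mult_nonneg_nonneg) (auto simp: less_imp_le)

lemma Wc_bnd: "s \<in> {ta..tb} \<Longrightarrow> Wc s \<le> Kb * Kb"
proof -
  assume s: "s \<in> {ta..tb}"
  have a: "kbar dI s (s - tau s) * p (s - tau s) \<le> 1 * Kb"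
    using kbar_le1[OF dI0] Kb[OF s] p0 kbar_pos[of dI s "s - tau s"]
    by (intro mult_mono) auto
  have b: "(1 - deriv tau s) * (kbar dI s (s - tau s) * p (s - tau s)) \<le> Kb * Kb"
    using a Kb[OF s] dtau1 Kb0 kbar_pos[of dI s "s - tau s"] p0 by (intro mult_mono) (auto simp: less_imp_le)
  have X: "0 \<le> (1 - deriv tau s) * (kbar dI s (s - tau s) * p (s - tau s))"
    using kbar_pos[of dI s "s - tau s"] p0 dtau1 by (intro mult_nonneg_nonneg) (auto simp: less_imp_le)
  have "Wc s \<le> 1 * (Kb * Kb)" unfolding Wc_def
    by (rule mult_mono[OF kbar_le1[OF dM0] b _ X]) simp
  thus ?thesis by simp
qed

lemma bb_range: "0 < bb s" "bb s \<le> 1"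
  unfolding bb_def using kbar_pos kbar_le1[OF dM0] by auto

lemma QB_eq: "QB z = z * kbar dM T 0 + integral {ta..tb} (\<lambda>s. Wc s * h (z * bb s))"
proof -
  have "Rop DI dI tau p h s (\<lambda>_. z * kbar dM (s - tau s) 0) 0
      = (1 - deriv tau s) * (kbar dI s (s - tau s) * (p (s - tau s) * h (z * bb s)))" for s
    unfolding Rop_def kconv_eq[OF DI0] bb_def by (simp add: gconv_const)
  thus ?thesis unfolding Qbar_def Wc_def by (simp add: mult_ac)
qed

lemma int_bnd: "(\<lambda>s. Wc s * hc (z * bb s)) integrable_on {ta..tb}" if "z \<in> {0..ustar}" for z
proof -
  have "\<forall>s\<in>{ta..tb}. \<bar>Wc s * hc (z * bb s)\<bar> \<le> Kb * Kb * Hm"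
  proof
    fix s assume s: "s \<in> {ta..tb}"
    have "z * bb s \<le> z * 1" using that bb_range[of s] by (intro mult_left_mono) auto
    hence zb: "z * bb s \<in> {0..ustar}" using that bb_range[of s] by auto
    hence "hc (z * bb s) = h (z * bb s)" unfolding hc_def by simp
    moreover have "0 \<le> h (z * bb s)" "h (z * bb s) \<le> Hm" using zb h0 h_le_Hm by auto
    ultimately show "\<bar>Wc s * hc (z * bb s)\<bar> \<le> Kb * Kb * Hm"
      using Wc_bnd[OF s] Wc_nonneg by (simp add: abs_mult mult_mono)
  qed
  thus ?thesis by (intro set_int_bounded) auto
qed

lemma hc_eq: "z \<ge> 0 \<Longrightarrow> hc (z * bb s) = h (z * bb s)"
  unfolding hc_def using bb_range[of s] by simp

lemma ident:
  assumes s: "s \<in> {ta..tb}"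
  shows "Wc s * bb s * h0' = kbar dM T 0 * (dR0 dI tau p h0' s / kbar dM s (s - tau s))"
proof -
  have o: "0 \<le> s - tau s" "s - tau s \<le> s" "s \<le> T" using sb s by auto
  have e1: "tint dM 0 (s - tau s) + tint dM (s - tau s) s = tint dM 0 s" by (rule tint_add[OF cdM o(1,2)])
  have e2: "tint dM 0 s + tint dM s T = tint dM 0 T" by (rule tint_add[OF cdM _ o(3)]) (use o in auto)
  have k: "kbar dM T s * kbar dM (s - tau s) 0 = kbar dM T 0 / kbar dM s (s - tau s)"
    unfolding kbar_def using e1 e2 by (simp add: exp_minus_inverse exp_add[symmetric] exp_diff[symmetric] field_simps)
  have "Wc s * bb s * h0' = (kbar dM T s * kbar dM (s - tau s) 0) * ((1 - deriv tau s) * kbar dI s (s - tau s) * p (s - tau s) * h0')"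
    by (simp add: Wc_def bb_def mult_ac)
  also have "\<dots> = kbar dM T 0 / kbar dM s (s - tau s) * ((1 - deriv tau s) * kbar dI s (s - tau s) * p (s - tau s) * h0')"
    unfolding k ..
  also have "\<dots> = kbar dM T 0 * (dR0 dI tau p h0' s / kbar dM s (s - tau s))"
    unfolding dR0_def kbar_def[of dI] by simp
  finally show ?thesis .
qed

lemma kb_lt1: "kbar dM T 0 < 1"
proof -
  have "kbar dM T 0 \<noteq> 1" using Lgt unfolding Lnum_def by auto
  thus ?thesis using kbar_le1[OF dM0, of T 0] by simp
qed

definition Iint where "Iint = integral {ta..tb} (\<lambda>s. dR0 dI tau p h0' s / kbar dM s (s - tau s))"

lemma gap: "kbar dM T 0 * Iint > 1 - kbar dM T 0"
proof -
  have "Lnum T dM dI tau p h0' ta tb = kbar dM T 0 / (1 - kbar dM T 0) * Iint"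
    unfolding Lnum_def Iint_def ..
  hence "kbar dM T 0 / (1 - kbar dM T 0) * Iint > 1" using Lgt by simp
  thus ?thesis using kb_lt1 by (simp add: field_simps)
qed

lemma JI: "integral {ta..tb} (\<lambda>s. Wc s * bb s * h0') = kbar dM T 0 * Iint"
proof -
  have "integral {ta..tb} (\<lambda>s. Wc s * bb s * h0') = integral {ta..tb} (\<lambda>s. kbar dM T 0 * (dR0 dI tau p h0' s / kbar dM s (s - tau s)))"
    by (rule integral_cong) (rule ident)
  also have "\<dots> = kbar dM T 0 * Iint" unfolding Iint_def
    using integral_cmul[where c="kbar dM T 0" and f="\<lambda>s. dR0 dI tau p h0' s / kbar dM s (s - tau s)" and S="{ta..tb}"] by simp
  finally show ?thesis .
qed

lemma Wb_int: "(\<lambda>s. Wc s * bb s) integrable_on {ta..tb}"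
proof (rule set_int_bounded[where B="Kb * Kb"])
  show "(\<lambda>s. Wc s * bb s) \<in> borel_measurable borel" by measurable
  show "\<forall>s\<in>{ta..tb}. \<bar>Wc s * bb s\<bar> \<le> Kb * Kb"
  proof
    fix s assume s: "s \<in> {ta..tb}"
    have "Wc s * bb s \<le> Kb * Kb * 1" using Wc_bnd[OF s] bb_range[of s] Wc_nonneg Kb0
      by (intro mult_mono) auto
    thus "\<bar>Wc s * bb s\<bar> \<le> Kb * Kb" using Wc_nonneg[of s] bb_range[of s] by simp
  qed
qed

lemma h_int: "z \<in> {0..ustar} \<Longrightarrow> (\<lambda>s. Wc s * h (z * bb s)) integrable_on {ta..tb}"
proof -
  assume z: "z \<in> {0..ustar}"
  have "(\<lambda>s. Wc s * hc (z * bb s)) integrable_on {ta..tb}" by (rule int_bnd[OF z])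
  moreover have "(\<lambda>s. Wc s * hc (z * bb s)) = (\<lambda>s. Wc s * h (z * bb s))" using hc_eq z by auto
  ultimately show ?thesis by simp
qed

lemma hder_lower: "\<eta> > 0 \<Longrightarrow> \<exists>d>0. \<forall>y. 0 < y \<and> y < d \<longrightarrow> (h0' - \<eta>) * y \<le> h y"
proof -
  assume e: "\<eta> > 0"
  have "((\<lambda>y. (h y - h 0) / (y - 0)) \<longlongrightarrow> h0') (at 0 within {0..})"
    using hder by (simp add: has_field_derivative_iff)
  hence "\<forall>\<^sub>F y in at 0 within {0..}. dist ((h y - h 0) / (y - 0)) h0' < \<eta>"
    using e tendstoD by blast
  then obtain d where d: "d > 0" "\<forall>y\<in>{0..}. y \<noteq> 0 \<and> dist y 0 < d \<longrightarrow> dist ((h y - h 0) / (y - 0)) h0' < \<eta>"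
    unfolding eventually_at by blast
  show ?thesis
  proof (intro exI[of _ d] conjI allI impI)
    show "d > 0" by (rule d(1))
    fix y :: real assume y: "0 < y \<and> y < d"
    hence "dist (h y / y) h0' < \<eta>" using d(2) h00 by (auto simp: dist_real_def)
    hence "h0' - \<eta> < h y / y" by (simp add: dist_real_def abs_less_iff)
    thus "(h0' - \<eta>) * y \<le> h y" using y by (simp add: field_simps)
  qed
qed

lemma near0: "\<exists>d>0. \<forall>z. 0 < z \<and> z < d \<longrightarrow> z < QB z"
proof -
  define kb where "kb = kbar dM T 0"
  define J where "J = integral {ta..tb} (\<lambda>s. Wc s * bb s)"
  have J0: "J \<ge> 0" unfolding J_def using Wb_int Wc_nonneg bb_range
    by (intro integral_nonneg) (auto intro: mult_nonneg_nonneg less_imp_le)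
  define gp where "gp = kb * Iint - (1 - kb)"
  have gp: "gp > 0" unfolding gp_def kb_def using gap by simp
  define \<eta> where "\<eta> = gp / (J + 1)"
  have e0: "\<eta> > 0" unfolding \<eta>_def using gp J0 by simp
  have eJ: "\<eta> * J < gp"
  proof -
    have "\<eta> * J = gp * (J / (J + 1))" unfolding \<eta>_def by simp
    also have "\<dots> < gp * 1" using gp J0 by (intro mult_strict_left_mono) auto
    finally show ?thesis by simp
  qed
  obtain d1 where d1: "d1 > 0" "\<forall>y. 0 < y \<and> y < d1 \<longrightarrow> (h0' - \<eta>) * y \<le> h y"
    using hder_lower[OF e0] by blast
  show ?thesis
  proof (intro exI[of _ "min d1 ustar"] conjI allI impI)
    show "min d1 ustar > 0" using d1 us by simp
    fix z assume z: "0 < z \<and> z < min d1 ustar"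
    have zr: "z \<in> {0..ustar}" using z by auto
    have pw: "z * (Wc s * bb s * h0') - z * \<eta> * (Wc s * bb s) \<le> Wc s * h (z * bb s)" if s: "s \<in> {ta..tb}" for s
    proof -
      have le: "z * bb s \<le> z * 1" using z bb_range[of s] by (intro mult_left_mono) auto
      have "0 < z * bb s" using z bb_range[of s] by simp
      moreover have "z * bb s < d1" using le z by linarith
      ultimately have "0 < z * bb s \<and> z * bb s < d1" by simp
      hence "(h0' - \<eta>) * (z * bb s) \<le> h (z * bb s)" using d1(2) by blast
      hence "Wc s * ((h0' - \<eta>) * (z * bb s)) \<le> Wc s * h (z * bb s)"
        using Wc_nonneg by (intro mult_left_mono) auto
      thus ?thesis by (simp add: algebra_simps)
    qed
    have i1a: "(\<lambda>s. z * (Wc s * bb s * h0')) integrable_on {ta..tb}"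
      using integrable_on_cmult_left[OF integrable_on_cmult_right[OF Wb_int, of h0'], of z] by simp
    have i1b: "(\<lambda>s. z * \<eta> * (Wc s * bb s)) integrable_on {ta..tb}"
      using integrable_on_cmult_left[OF Wb_int, of "z * \<eta>"] by simp
    have i1: "(\<lambda>s. z * (Wc s * bb s * h0') - z * \<eta> * (Wc s * bb s)) integrable_on {ta..tb}"
      by (rule integrable_diff[OF i1a i1b])
    have "integral {ta..tb} (\<lambda>s. z * (Wc s * bb s * h0') - z * \<eta> * (Wc s * bb s)) = z * (kb * Iint) - z * \<eta> * J"
    proof -
      have a: "(\<lambda>s. Wc s * bb s * h0') integrable_on {ta..tb}" using integrable_on_cmult_right[OF Wb_int, of h0'] by simp
      have "integral {ta..tb} (\<lambda>s. z * (Wc s * bb s * h0') - z * \<eta> * (Wc s * bb s))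
          = integral {ta..tb} (\<lambda>s. z * (Wc s * bb s * h0')) - integral {ta..tb} (\<lambda>s. z * \<eta> * (Wc s * bb s))"
        by (rule integral_diff[OF i1a i1b])
      also have "\<dots> = z * integral {ta..tb} (\<lambda>s. Wc s * bb s * h0') - z * \<eta> * J"
        unfolding J_def using integral_cmul[where c=z and f="\<lambda>s. Wc s * bb s * h0'" and S="{ta..tb}"]
          integral_cmul[where c="z * \<eta>" and f="\<lambda>s. Wc s * bb s" and S="{ta..tb}"] by simp
      finally show ?thesis unfolding JI kb_def .
    qed
    moreover have "integral {ta..tb} (\<lambda>s. z * (Wc s * bb s * h0') - z * \<eta> * (Wc s * bb s)) \<le> integral {ta..tb} (\<lambda>s. Wc s * h (z * bb s))"
      by (rule integral_le[OF i1 h_int[OF zr] pw])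
    ultimately have "z * (kb * Iint) - z * \<eta> * J \<le> integral {ta..tb} (\<lambda>s. Wc s * h (z * bb s))" by simp
    moreover have "z * (kb * Iint) - z * \<eta> * J + z * kb - z = z * (gp - \<eta> * J)"
      unfolding gp_def by (simp add: algebra_simps)
    moreover have "z * (gp - \<eta> * J) > 0" using z eJ by simp
    ultimately show "z < QB z" unfolding QB_eq kb_def by (simp add: mult.commute)
  qed
qed

lemma QB_cont: "continuous_on {0..ustar} QB"
  unfolding continuous_on_iff
proof (intro ballI allI impI)
  fix z0 e :: real assume z0: "z0 \<in> {0..ustar}" and e: "e > 0"
  obtain N \<delta> where d: "\<delta> > 0" and loc: "\<forall>\<phi> \<psi>. adm \<phi> \<longrightarrow> adm \<psi> \<longrightarrow> (\<forall>y. \<bar>y\<bar> \<le> N \<longrightarrow> \<bar>\<phi> y - \<psi> y\<bar> \<le> \<delta>) \<longrightarrow>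
     (\<forall>x. \<bar>x\<bar> \<le> 0 \<longrightarrow> \<bar>QQ \<phi> x - QQ \<psi> x\<bar> \<le> e / 2)"
    using Q_local[of "e/2" 0] e by auto
  show "\<exists>d>0. \<forall>z\<in>{0..ustar}. dist z z0 < d \<longrightarrow> dist (QB z) (QB z0) < e"
  proof (intro exI[of _ \<delta>] conjI ballI impI)
    show "\<delta> > 0" by (rule d)
    fix z assume z: "z \<in> {0..ustar}" and dz: "dist z z0 < \<delta>"
    have a1: "adm (\<lambda>_. z)" "adm (\<lambda>_. z0)" using z z0 by (auto intro: adm_const)
    have cl: "\<forall>y. \<bar>y\<bar> \<le> N \<longrightarrow> \<bar>(\<lambda>_. z) y - (\<lambda>_. z0) y\<bar> \<le> \<delta>" using dz by (simp add: dist_real_def)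
    have l1: "adm (\<lambda>_. z) \<longrightarrow> adm (\<lambda>_. z0) \<longrightarrow> (\<forall>y. \<bar>y\<bar> \<le> N \<longrightarrow> \<bar>(\<lambda>_. z) y - (\<lambda>_. z0) y\<bar> \<le> \<delta>) \<longrightarrow>
     (\<forall>x. \<bar>x\<bar> \<le> 0 \<longrightarrow> \<bar>QQ (\<lambda>_. z) x - QQ (\<lambda>_. z0) x\<bar> \<le> e / 2)"
      by (rule spec[OF spec[OF loc]])
    have "\<forall>x. \<bar>x\<bar> \<le> 0 \<longrightarrow> \<bar>QQ (\<lambda>_. z) x - QQ (\<lambda>_. z0) x\<bar> \<le> e / 2"
      using mp[OF mp[OF mp[OF l1 a1(1)] a1(2)] cl] .
    hence "\<bar>QQ (\<lambda>_. z) 0 - QQ (\<lambda>_. z0) 0\<bar> \<le> e / 2" by simp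
    thus "dist (QB z) (QB z0) < e" unfolding Q_const using e by (simp add: dist_real_def)
  qed
qed

lemma QB_gt: "\<gamma> \<in> {0<..<ustar} \<Longrightarrow> \<gamma> < QB \<gamma>"
proof (rule ccontr)
  assume g: "\<gamma> \<in> {0<..<ustar}" and n: "\<not> \<gamma> < QB \<gamma>"
  obtain d where d: "d > 0" "\<forall>z. 0 < z \<and> z < d \<longrightarrow> z < QB z" using near0 by blast
  define z1 where "z1 = min (\<gamma>/2) (d/2)"
  have z1: "0 < z1" "z1 < d" "z1 \<le> \<gamma>" using g d unfolding z1_def by auto
  have f1: "QB z1 - z1 > 0" using d(2) z1 by auto
  have c: "continuous_on {z1..\<gamma>} (\<lambda>z. QB z - z)"
    by (intro continuous_intros continuous_on_subset[OF QB_cont]) (use z1 g in auto)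
  obtain x where x: "z1 \<le> x" "x \<le> \<gamma>" "QB x - x = 0"
    using IVT2'[of "\<lambda>z. QB z - z" \<gamma> 0 z1, OF _ _ z1(3) c] n f1 by auto
  have "ustar \<le> x" using mini x z1 by auto
  thus False using x g by auto
qed

end



theorem lemma4p1:
  fixes T alpha beta ta tb zs ustar :: real
    and DM DI dM dI tau p h h' :: "real \<Rightarrow> real"
  defines "Q \<equiv> Qop T DM dM DI dI tau p h ta tb"
    and "QB \<equiv> Qbar T dM DI dI tau p h ta tb"
  assumes T_pos: "T > 0"
    and C1: "DM C1_differentiable_on UNIV" "DI C1_differentiable_on UNIV"
            "dM C1_differentiable_on UNIV" "dI C1_differentiable_on UNIV"
            "tau C1_differentiable_on UNIV" "p C1_differentiable_on UNIV"
    and per: "periodic T DM" "periodic T DI" "periodic T dM" "periodic T dI"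
             "periodic T tau" "periodic T p"
    and ranges: "\<forall>t. DM t \<ge> 0" "\<forall>t. DI t \<ge> 0" "\<forall>t. dM t > 0" "\<forall>t. dI t > 0"
                "\<forall>t. tau t > 0" "\<forall>t. p t \<ge> 0"
    and h_C1: "continuous_on {0..} h'"
              "\<forall>z \<ge> 0. (h has_real_derivative h' z) (at z within {0..})"
    and h_range: "\<forall>z \<ge> 0. h z \<ge> 0"
    and a_order: "0 < alpha" "alpha \<le> beta" "beta < ta" "ta \<le> tb" "tb < T"
    and a_delay: "ta - tau ta = alpha" "tb - tau tb = beta"
    and a_p: "\<forall>t \<in> {0..alpha} \<union> {beta..T}. p t = 0"
    and b: "\<forall>t. deriv tau t < 1"
    and c: "h 0 = 0" "(h \<longlongrightarrow> 0) at_top" "zs > 0"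
           "strict_mono_on {0..<zs} h"
           "\<forall>x y. zs \<le> x \<and> x < y \<longrightarrow> h y < h x"
    and d: "\<forall>z \<ge> 0. \<forall>l \<in> {0<..<1}. h (l * z) \<ge> l * h z"
    and e: "Lnum T dM dI tau p (h' 0) ta tb > 1"
    and ustar: "ustar > 0" "QB ustar = ustar"
               "\<forall>z > 0. QB z = z \<longrightarrow> ustar \<le> z"
    and h_mono: "mono_on {0..ustar} h"
  shows "(\<forall>phi \<in> Cr ustar. Q phi \<in> Cr ustar)
    \<and> (\<forall>y. \<forall>phi \<in> Cr ustar. Q (translate y phi) = translate y (Q phi))
    \<and> (\<forall>phi \<in> Cr ustar. \<forall>\<epsilon> > 0. \<exists>\<delta> > 0. \<forall>psi \<in> Cr ustar.
          conorm (\<lambda>x. psi x - phi x) < \<delta> \<longrightarrow> conorm (\<lambda>x. Q psi x - Q phi x) < \<epsilon>)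
    \<and> (\<forall>u \<in> Cr ustar. \<forall>v \<in> Cr ustar. (\<forall>x. v x \<le> u x) \<longrightarrow> (\<forall>x. Q v x \<le> Q u x))
    \<and> (QB ` {0..ustar} \<subseteq> {0..ustar} \<and> {z \<in> {0..ustar}. QB z = z} = {0, ustar}
       \<and> (\<forall>\<gamma> \<in> {0<..<ustar}. \<forall>x. Q (\<lambda>_. \<gamma>) x > \<gamma>))
    \<and> (\<forall>phi \<in> Cr ustar. \<forall>l \<in> {0<..<1}. \<forall>x. Q (\<lambda>y. l * phi y) x \<ge> l * Q phi x)"
proof -
  obtain Dt where Dt: "\<forall>x. (tau has_vector_derivative Dt x) (at x)" "continuous_on UNIV Dt"
    using C1(5) unfolding C1_differentiable_on_def by auto
  have dtau: "\<And>x. (tau has_real_derivative Dt x) (at x)"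
    using Dt(1) by (simp add: has_real_derivative_iff_has_vector_derivative)
  have deq: "deriv tau = Dt" using dtau by (auto intro!: DERIV_imp_deriv)
  have ch: "continuous_on {0..} h"
    unfolding continuous_on_eq_continuous_within
  proof
    fix z :: real assume "z \<in> {0..}"
    hence "(h has_real_derivative h' z) (at z within {0..})" using h_C1(2) by auto
    thus "continuous (at z within {0..}) h" by (rule DERIV_continuous)
  qed
  have sb: "\<forall>s\<in>{ta..tb}. 0 \<le> s - tau s \<and> s - tau s \<le> s \<and> s \<le> T"
  proof
    fix s assume s: "s \<in> {ta..tb}"
    have "ta - tau ta \<le> s - tau s"
    proof (cases "ta = s")
      case False
      hence "ta < s" using s by auto
      have "ta - tau ta < s - tau s"
      proof (rule DERIV_pos_imp_increasing[OF \<open>ta < s\<close>])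
        fix x :: real
        show "\<exists>y. ((\<lambda>s. s - tau s) has_real_derivative y) (at x) \<and> y > 0"
          using dtau[of x] b deq by (intro exI[of _ "1 - Dt x"]) (auto intro!: derivative_eq_intros)
      qed
      thus ?thesis by simp
    qed simp
    thus "0 \<le> s - tau s \<and> s - tau s \<le> s \<and> s \<le> T"
      using a_delay a_order s ranges(5) by (auto simp: less_imp_le)
  qed
  interpret QL3 T ta tb ustar DM DI dM dI tau p h "h' 0"
  proof (unfold_locales)
    show "continuous_on UNIV DM" "continuous_on UNIV DI" "continuous_on UNIV dM" "continuous_on UNIV dI"
      "continuous_on UNIV tau" "continuous_on UNIV p"
      using C1 by (auto intro: C1_differentiable_imp_continuous_on)
    show "continuous_on UNIV (deriv tau)" using deq Dt(2) by simp
    show "\<forall>t. 0 \<le> DM t" "\<forall>t. 0 \<le> DI t" "\<forall>t. 0 \<le> dM t" "\<forall>t. 0 \<le> dI t" "\<forall>t. 0 \<le> p t"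
      using ranges by (auto simp: less_imp_le)
    show "\<forall>t. deriv tau t < 1" by (rule b)
    show "continuous_on {0..} h" by (rule ch)
    show "\<forall>z\<ge>0. 0 \<le> h z" by (rule h_range)
    show "mono_on {0..ustar} h" by (rule h_mono)
    show "0 < ustar" by (rule ustar(1))
    show "ta \<le> tb" by (rule a_order(4))
    show "\<forall>z\<ge>0. \<forall>l\<in>{0<..<1}. l * h z \<le> h (l * z)" using d by blast
    show "h 0 = 0" by (rule c(1))
    show "Qbar T dM DI dI tau p h ta tb ustar = ustar" using ustar(2) unfolding QB_def .
    show "\<forall>z>0. Qbar T dM DI dI tau p h ta tb z = z \<longrightarrow> ustar \<le> z" using ustar(3) unfolding QB_def .
    show "(h has_real_derivative h' 0) (at 0 within {0..})" using h_C1(2) by simp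
    show "1 < Lnum T dM dI tau p (h' 0) ta tb" by (rule e)
    show "\<forall>s\<in>{ta..tb}. 0 \<le> s - tau s \<and> s - tau s \<le> s \<and> s \<le> T" by (rule sb)
  qed
  have fix0: "{z \<in> {0..ustar}. QB z = z} = {0, ustar}"
  proof
    show "{z \<in> {0..ustar}. QB z = z} \<subseteq> {0, ustar}"
    proof
      fix z assume z: "z \<in> {z \<in> {0..ustar}. QB z = z}"
      show "z \<in> {0, ustar}"
      proof (cases "z = 0")
        case False
        hence "ustar \<le> z" using z ustar(3) by auto
        thus ?thesis using z by auto
      qed simp
    qed
    show "{0, ustar} \<subseteq> {z \<in> {0..ustar}. QB z = z}"
      using QB0 ustar(1,2) unfolding QB_def by auto
  qed
  have img: "QB ` {0..ustar} \<subseteq> {0..ustar}"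
  proof
    fix w assume "w \<in> QB ` {0..ustar}"
    then obtain z where z: "z \<in> {0..ustar}" "w = QB z" by auto
    have "0 \<le> QQ (\<lambda>_. z) 0 \<and> QQ (\<lambda>_. z) 0 \<le> ustar" using z by (intro Q_range adm_const) auto
    thus "w \<in> {0..ustar}" using z unfolding Q_const QB_def by auto
  qed
  show ?thesis
    unfolding Q_def
  proof (intro conjI)
    show "\<forall>phi\<in>Cr ustar. QQ phi \<in> Cr ustar" using Q_Cr by blast
    show "\<forall>y. \<forall>phi\<in>Cr ustar. QQ (translate y phi) = translate y (QQ phi)"
      using Q_translate Cr_adm by blast
    show "\<forall>phi\<in>Cr ustar. \<forall>\<epsilon>>0. \<exists>\<delta>>0. \<forall>psi\<in>Cr ustar. conorm (\<lambda>x. psi x - phi x) < \<delta> \<longrightarrow> conorm (\<lambda>x. QQ psi x - QQ phi x) < \<epsilon>"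
      using Q_conorm by blast
    show "\<forall>u\<in>Cr ustar. \<forall>v\<in>Cr ustar. (\<forall>x. v x \<le> u x) \<longrightarrow> (\<forall>x. QQ v x \<le> QQ u x)"
      using Q_mono Cr_adm by blast
    show "QB ` {0..ustar} \<subseteq> {0..ustar}" by (rule img)
    show "{z \<in> {0..ustar}. QB z = z} = {0, ustar}" by (rule fix0)
    show "\<forall>\<gamma>\<in>{0<..<ustar}. \<forall>x. \<gamma> < QQ (\<lambda>_. \<gamma>) x"
      using QB_gt unfolding Q_const by blast
    show "\<forall>phi\<in>Cr ustar. \<forall>l\<in>{0<..<1}. \<forall>x. l * QQ phi x \<le> QQ (\<lambda>y. l * phi y) x"
      using Q_scale Cr_adm by blast
  qed
qed


end
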